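(* Let $\theta_1^*,\dots,\theta_n^*\in\mathbb{R}^d$ lie in the Euclidean ball of radius $B$ centered at the origin, $\nu_n^*=\frac1n\sum_{i=1}^n\delta_{\theta_i^*}$, $\mathsf f_n=\varphi_\sigma\star\nu_n^*$ where $\varphi_\sigma$ is the $N(0,\sigma^2I_d)$ density, and let $Y_1,\dots,Y_n$ be i.i.d. with density $\mathsf f_n$. Let $\widehat{\mathsf f}_n$ be the Kiefer–Wolfowitz NPMLE and $\widehat\nu$ its (atomic) mixing measure. For $\bar h>0$ let $\mathcal E=\{d_H(\mathsf f_n,\widehat{\mathsf f}_n)\le\bar h\}$. Then, conditional on $\mathcal E$, for any $s\ge1$, $$\int_{\mathbb{R}^d}\|x\|_2^s\,d\widehat\nu(x)\le C_1(d,\sigma,s)(\log n)^{s/2}\,\bar h+C_2(d,s,\sigma,B)$$ with probability at least $1-1/\{n\,\mathbb{P}(\mathcal E)\}$, where $C_1,C_2>0$ depend only on the indicated quantities.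
   Context: The Kiefer–Wolfowitz NPMLE is a minimizer $\widehat{\mathsf f}_n$ of $-\sum_{i=1}^n\log\mathsf f(Y_i)$ over all densities $\mathsf f(y)=\int\varphi_\sigma(y-\theta)\,d\nu(\theta)$, $\nu$ a probability distribution on $\mathbb{R}^d$; its mixing measure $\widehat\nu$ satisfies $\widehat\nu\star\varphi_\sigma=\widehat{\mathsf f}_n$ and is atomic. $d_H(f,g)=\big(\int(\sqrt f-\sqrt g)^2\big)^{1/2}$ denotes the Hellinger distance between densities. *)

theory Defs
  imports "HOL-Probability.Probability"
begin

definition gauss_dens :: "real \<Rightarrow> 'a::euclidean_space \<Rightarrow> real" where
  "gauss_dens \<sigma> y =
     (2 * pi * \<sigma>\<^sup>2) powr (- real DIM('a) / 2) * exp (- (norm y)\<^sup>2 / (2 * \<sigma>\<^sup>2))"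

definition mix_dens :: "real \<Rightarrow> 'a::euclidean_space measure \<Rightarrow> 'a \<Rightarrow> real" where
  "mix_dens \<sigma> \<nu> y = (\<integral>\<theta>. gauss_dens \<sigma> (y - \<theta>) \<partial>\<nu>)"

definition emp_mix_dens :: "real \<Rightarrow> (nat \<Rightarrow> 'a::euclidean_space) \<Rightarrow> nat \<Rightarrow> 'a \<Rightarrow> real" where
  "emp_mix_dens \<sigma> \<theta> n y = (1 / real n) * (\<Sum>i<n. gauss_dens \<sigma> (y - \<theta> i))"

definition hellinger :: "('a::euclidean_space \<Rightarrow> real) \<Rightarrow> ('a \<Rightarrow> real) \<Rightarrow> real" where
  "hellinger f g = sqrt (\<integral>y. (sqrt (f y) - sqrt (g y))\<^sup>2 \<partial>lborel)"

definition mixing_measures :: "'a::euclidean_space measure set" where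
  "mixing_measures = {\<nu>. prob_space \<nu> \<and> sets \<nu> = sets borel}"

definition npmle_mixing :: "real \<Rightarrow> nat \<Rightarrow> (nat \<Rightarrow> 'a::euclidean_space) \<Rightarrow> 'a measure \<Rightarrow> bool" where
  "npmle_mixing \<sigma> n Y \<nu> \<longleftrightarrow> \<nu> \<in> mixing_measures \<and>
     (\<forall>\<mu>\<in>mixing_measures.
        - (\<Sum>i<n. ln (mix_dens \<sigma> \<nu> (Y i))) \<le> - (\<Sum>i<n. ln (mix_dens \<sigma> \<mu> (Y i))))"

definition sample_space :: "real \<Rightarrow> (nat \<Rightarrow> 'a::euclidean_space) \<Rightarrow> nat \<Rightarrow> (nat \<Rightarrow> 'a) measure" where
  "sample_space \<sigma> \<theta> n =
     PiM {..<n} (\<lambda>_. density lborel (\<lambda>y. ennreal (emp_mix_dens \<sigma> \<theta> n y)))"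

end

theory Submission
  imports Defs
begin


lemma powr_aux: fixes a::real assumes p: "a > 0"
  shows "a powr (- real d / 2) = (1 / sqrt a) ^ d"
proof -
  have "1 / sqrt a = a powr (-1/2)"
    using p by (simp add: powr_minus_divide powr_half_sqrt)
  hence "(1 / sqrt a) ^ d = (a powr (-1/2)) ^ d" by simp
  also have "\<dots> = a powr (-1/2 * real d)"
    using p by (simp add: powr_realpow[symmetric] powr_powr)
  finally show ?thesis by simp
qed

lemma gauss_prod:
  fixes y :: "'a::euclidean_space"
  assumes "\<sigma> > 0"
  shows "gauss_dens \<sigma> y = (\<Prod>b\<in>Basis. normal_density 0 \<sigma> (y \<bullet> b))"
proof -
  have n: "(norm y)\<^sup>2 = (\<Sum>b\<in>Basis. (y \<bullet> b)\<^sup>2)"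
  proof -
    have "(norm y)\<^sup>2 = y \<bullet> y" by (rule power2_norm_eq_inner)
    also have "\<dots> = (\<Sum>b\<in>Basis. (y \<bullet> b) * (y \<bullet> b))" by (rule euclidean_inner)
    finally show ?thesis by (simp add: power2_eq_square)
  qed
  have c: "(2 * pi * \<sigma>\<^sup>2) powr (- real DIM('a) / 2) = (1 / sqrt (2 * pi * \<sigma>\<^sup>2)) ^ DIM('a)"
    by (rule powr_aux) (use assms in simp)
  have e: "exp (- (norm y)\<^sup>2 / (2 * \<sigma>\<^sup>2)) = (\<Prod>b\<in>Basis. exp (- (y \<bullet> b)\<^sup>2 / (2 * \<sigma>\<^sup>2)))"
    unfolding n by (simp add: exp_sum[symmetric] sum_divide_distrib sum_negf)
  have "(\<Prod>b\<in>Basis. normal_density 0 \<sigma> (y \<bullet> b)) =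
    (\<Prod>b\<in>(Basis::'a set). 1 / sqrt (2 * pi * \<sigma>\<^sup>2)) * (\<Prod>b\<in>Basis. exp (- (y \<bullet> b)\<^sup>2 / (2 * \<sigma>\<^sup>2)))"
    by (simp only: normal_density_def diff_zero prod.distrib)
  also have "\<dots> = gauss_dens \<sigma> y"
    unfolding gauss_dens_def c e prod_constant by simp
  finally show ?thesis by simp
qed



lemma gauss_dens_pos: "\<sigma> > 0 \<Longrightarrow> gauss_dens \<sigma> y > 0"
  unfolding gauss_dens_def by simp
lemma gauss_dens_nonneg: "\<sigma> > 0 \<Longrightarrow> gauss_dens \<sigma> y \<ge> 0"
  unfolding gauss_dens_def by simp
lemma gauss_dens_meas[measurable]: "gauss_dens \<sigma> \<in> borel_measurable borel"
  unfolding gauss_dens_def by measurable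

lemma gauss_nn_integral:
  assumes "\<sigma> > 0"
  shows "(\<integral>\<^sup>+y. ennreal (gauss_dens \<sigma> (y::'a::euclidean_space)) \<partial>lborel) = 1"
proof -
  have "(\<integral>\<^sup>+y. ennreal (gauss_dens \<sigma> (y::'a)) \<partial>lborel) =
     (\<integral>\<^sup>+y. (\<Prod>b\<in>Basis. ennreal (normal_density 0 \<sigma> ((y::'a) \<bullet> b))) \<partial>lborel)"
    by (intro nn_integral_cong) (simp add: gauss_prod[OF assms] prod_ennreal normal_density_nonneg)
  also have "\<dots> = (\<Prod>b\<in>(Basis::'a set). (\<integral>\<^sup>+x. ennreal (normal_density 0 \<sigma> x) \<partial>lborel))"
    by (rule nn_integral_lborel_prod) auto
  also have "\<dots> = 1"
    using assms by (subst nn_integral_eq_integral) (auto simp: normal_density_nonneg)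
  finally show ?thesis .
qed

lemma nn_integral_translate:
  fixes f :: "'a::euclidean_space \<Rightarrow> ennreal"
  assumes [measurable]: "f \<in> borel_measurable borel"
  shows "(\<integral>\<^sup>+y. f (y - x) \<partial>lborel) = (\<integral>\<^sup>+y. f y \<partial>lborel)"
proof -
  have "(\<integral>\<^sup>+y. f y \<partial>lborel) = (\<integral>\<^sup>+y. f y \<partial>(distr lborel borel ((+) (-x))))"
    by (simp add: lborel_distr_plus)
  also have "\<dots> = (\<integral>\<^sup>+y. f (-x + y) \<partial>lborel)"
    by (simp add: nn_integral_distr)
  finally show ?thesis by simp
qed

lemma nn_integral_reflect:
  fixes f :: "'a::euclidean_space \<Rightarrow> ennreal"
  assumes [measurable]: "f \<in> borel_measurable borel"
  shows "(\<integral>\<^sup>+y. f (- y) \<partial>lborel) = (\<integral>\<^sup>+y. f y \<partial>lborel)"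
proof -
  have "(\<integral>\<^sup>+y. f y \<partial>lborel) = (\<integral>\<^sup>+y. f y \<partial>(density (distr lborel borel (\<lambda>x. 0 + (-1) *\<^sub>R x)) (\<lambda>_. \<bar>-1::real\<bar>^DIM('a))))"
    using lborel_affine[of "-1::real" "0::'a"] by simp
  also have "\<dots> = (\<integral>\<^sup>+y. f (- y) \<partial>lborel)"
    by (simp add: nn_integral_density nn_integral_distr)
  finally show ?thesis by simp
qed

lemma gauss_scale:
  fixes y :: "'a::euclidean_space"
  assumes s: "\<sigma> > 0" and t: "\<tau> > 0"
  shows "gauss_dens \<sigma> y = (\<tau> / \<sigma>) powr real DIM('a) * exp ((norm y)\<^sup>2 / (2 * \<tau>\<^sup>2) - (norm y)\<^sup>2 / (2 * \<sigma>\<^sup>2)) * gauss_dens \<tau> y"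
proof -
  have a: "(2 * pi * \<sigma>\<^sup>2) powr (- real DIM('a) / 2) = (\<tau> / \<sigma>) powr real DIM('a) * (2 * pi * \<tau>\<^sup>2) powr (- real DIM('a) / 2)"
  proof -
    have "2 * pi * \<sigma>\<^sup>2 = (2 * pi * \<tau>\<^sup>2) * (\<sigma>/\<tau>)\<^sup>2" using t by (simp add: field_simps)
    hence "(2 * pi * \<sigma>\<^sup>2) powr (- real DIM('a) / 2) = (2 * pi * \<tau>\<^sup>2) powr (- real DIM('a) / 2) * ((\<sigma>/\<tau>)\<^sup>2) powr (- real DIM('a) / 2)"
      using s t by (simp add: powr_mult)
    also have "((\<sigma>/\<tau>)\<^sup>2) powr (- real DIM('a) / 2) = (\<tau> / \<sigma>) powr real DIM('a)"
    proof -
      have q: "\<sigma>/\<tau> > 0" using s t by simp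
      have "(\<sigma>/\<tau>)\<^sup>2 = (\<sigma>/\<tau>) powr (real 2)" using q by (simp only: powr_realpow)
      hence "((\<sigma>/\<tau>)\<^sup>2) powr (- real DIM('a) / 2) = (\<sigma>/\<tau>) powr (- real DIM('a))"
        by (simp add: powr_powr)
      also have "\<dots> = 1 / ((\<sigma>/\<tau>) powr real DIM('a))" by (rule powr_minus_divide)
      also have "\<dots> = (\<tau> / \<sigma>) powr real DIM('a)" using s t by (simp add: powr_divide)
      finally show ?thesis .
    qed
    finally show ?thesis by simp
  qed
  have b: "exp (- (norm y)\<^sup>2 / (2 * \<sigma>\<^sup>2)) = exp ((norm y)\<^sup>2 / (2 * \<tau>\<^sup>2) - (norm y)\<^sup>2 / (2 * \<sigma>\<^sup>2)) * exp (- (norm y)\<^sup>2 / (2 * \<tau>\<^sup>2))"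
    by (simp add: exp_add[symmetric])
  show ?thesis unfolding gauss_dens_def a b by (simp add: ac_simps)
qed



lemma polyexp_bound:
  fixes a s :: real assumes a: "a > 0" and s: "s \<ge> 0"
  shows "\<exists>K. \<forall>t\<ge>0. t powr s * exp (- t\<^sup>2 / a) \<le> K"
proof -
  define m where "m = nat \<lceil>s\<rceil> + 1"
  have m1: "m \<ge> 1" and ms: "s \<le> real (2*m)" using s by (auto simp: m_def) linarith
  have "t powr s * exp (- t\<^sup>2 / a) \<le> 1 + (a * m)^m" if t: "t \<ge> 0" for t
  proof -
    define x where "x = t\<^sup>2 / a"
    have x0: "x \<ge> 0" using a by (simp add: x_def)
    have "exp x = exp (x / m) ^ m"
      using m1 by (simp add: exp_of_nat_mult[symmetric])
    also have "\<dots> \<ge> (x / m) ^ m"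
    proof (rule power_mono)
      show "x / real m \<le> exp (x / real m)"
        using exp_ge_add_one_self[of "x / m"] by linarith
    qed (use x0 in simp)
    finally have ex: "(x / m) ^ m \<le> exp x" .
    have tp: "t ^ (2*m) = (a * m)^m * (x/m)^m"
    proof -
      have "(a*m)^m * (x/m)^m = (a*m*(x/m))^m" by (rule power_mult_distrib[symmetric])
      also have "a*m*(x/m) = t\<^sup>2" using a m1 by (simp add: x_def)
      finally show ?thesis by (simp add: power_mult)
    qed
    have "t powr s \<le> 1 + t ^ (2*m)"
    proof (cases "t \<le> 1")
      case True
      then have "t powr s \<le> 1 powr s" using t s by (intro powr_mono2) auto
      moreover have "0 \<le> t ^ (2*m)" using t by simp
      moreover have "1 powr s = (1::real)" by simp
      ultimately show ?thesis by linarith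
    next
      case False
      then have "t powr s \<le> t powr real (2*m)" using ms by (intro powr_mono) auto
      also have "\<dots> = t ^ (2*m)" using False by (intro powr_realpow) auto
      finally show ?thesis by simp
    qed
    also have "\<dots> \<le> 1 + (a*m)^m * exp x"
      unfolding tp using ex a by (intro add_left_mono mult_left_mono) auto
    also have "\<dots> \<le> (1 + (a*m)^m) * exp x"
      using x0 by (simp add: distrib_right)
    finally have "t powr s \<le> (1 + (a*m)^m) * exp x" .
    hence "t powr s * exp (-x) \<le> (1 + (a*m)^m) * exp x * exp (-x)"
      by (intro mult_right_mono) auto
    also have "\<dots> = 1 + (a*m)^m" by (simp add: exp_minus)
    finally show ?thesis by (simp add: x_def)
  qed
  then show ?thesis by blast
qed

lemma gauss_tail:
  fixes u :: real assumes s: "\<sigma> > 0" and u: "u \<ge> 0"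
  shows "(\<integral>\<^sup>+y. indicator {y. u \<le> norm y} y * ennreal (gauss_dens \<sigma> (y::'a::euclidean_space)) \<partial>lborel)
     \<le> ennreal (2 powr (real DIM('a) / 2) * exp (- u\<^sup>2 / (4 * \<sigma>\<^sup>2)))"
proof -
  define \<tau> where "\<tau> = sqrt 2 * \<sigma>"
  have t: "\<tau> > 0" using s by (simp add: \<tau>_def)
  have r: "(\<tau> / \<sigma>) powr real DIM('a) = 2 powr (real DIM('a) / 2)"
    using s by (simp add: \<tau>_def powr_half_sqrt[symmetric] powr_powr)
  have pw: "indicator {y. u \<le> norm y} y * ennreal (gauss_dens \<sigma> (y::'a))
     \<le> ennreal (2 powr (real DIM('a) / 2) * exp (- u\<^sup>2 / (4 * \<sigma>\<^sup>2))) * ennreal (gauss_dens \<tau> y)" for y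
  proof (cases "u \<le> norm y")
    case True
    have e: "(norm y)\<^sup>2 / (2 * \<tau>\<^sup>2) - (norm y)\<^sup>2 / (2 * \<sigma>\<^sup>2) = - (norm y)\<^sup>2 / (4 * \<sigma>\<^sup>2)"
      using s by (simp add: \<tau>_def field_simps)
    have "u\<^sup>2 \<le> (norm y)\<^sup>2" using True u by (simp add: power_mono)
    hence "exp (- (norm y)\<^sup>2 / (4 * \<sigma>\<^sup>2)) \<le> exp (- u\<^sup>2 / (4 * \<sigma>\<^sup>2))"
      using s by (simp add: divide_right_mono)
    hence "gauss_dens \<sigma> y \<le> 2 powr (real DIM('a) / 2) * exp (- u\<^sup>2 / (4 * \<sigma>\<^sup>2)) * gauss_dens \<tau> y"
      unfolding gauss_scale[OF s t, of y] r e
      using gauss_dens_nonneg[OF t, of y] by (intro mult_right_mono mult_left_mono) auto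
    then show ?thesis using True by (simp add: ennreal_mult'[symmetric] gauss_dens_nonneg[OF t])
  qed simp
  have "(\<integral>\<^sup>+y. indicator {y. u \<le> norm y} y * ennreal (gauss_dens \<sigma> (y::'a)) \<partial>lborel)
     \<le> (\<integral>\<^sup>+y. ennreal (2 powr (real DIM('a) / 2) * exp (- u\<^sup>2 / (4 * \<sigma>\<^sup>2))) * ennreal (gauss_dens \<tau> (y::'a)) \<partial>lborel)"
    by (intro nn_integral_mono pw)
  also have "\<dots> = ennreal (2 powr (real DIM('a) / 2) * exp (- u\<^sup>2 / (4 * \<sigma>\<^sup>2)))"
    by (simp add: nn_integral_cmult gauss_nn_integral[OF t])
  finally show ?thesis .
qed



lemma gauss_half:
  fixes y :: "'a::euclidean_space" assumes s: "\<sigma> > 0"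
  shows "gauss_dens \<sigma> y = 2 powr (real DIM('a) / 2) * exp (- (norm y)\<^sup>2 / (4 * \<sigma>\<^sup>2)) * gauss_dens (sqrt 2 * \<sigma>) y"
proof -
  define \<tau> where "\<tau> = sqrt 2 * \<sigma>"
  have t: "\<tau> > 0" using s by (simp add: \<tau>_def)
  have r: "(\<tau> / \<sigma>) powr real DIM('a) = 2 powr (real DIM('a) / 2)"
    using s by (simp add: \<tau>_def powr_half_sqrt[symmetric] powr_powr)
  have e: "(norm y)\<^sup>2 / (2 * \<tau>\<^sup>2) - (norm y)\<^sup>2 / (2 * \<sigma>\<^sup>2) = - (norm y)\<^sup>2 / (4 * \<sigma>\<^sup>2)"
    using s by (simp add: \<tau>_def field_simps)
  have "gauss_dens \<sigma> y = 2 powr (real DIM('a) / 2) * exp (- (norm y)\<^sup>2 / (4 * \<sigma>\<^sup>2)) * gauss_dens \<tau> y"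
    using gauss_scale[OF s t, of y] unfolding r e .
  then show ?thesis unfolding \<tau>_def .
qed

lemma gauss_moment:
  assumes s: "\<sigma> > 0" and p: "p \<ge> 0"
  shows "\<exists>K. (\<integral>\<^sup>+y. ennreal (norm (y::'a::euclidean_space) powr p * gauss_dens \<sigma> y) \<partial>lborel) \<le> ennreal K"
proof -
  obtain K0 where K0: "\<And>t. t \<ge> 0 \<Longrightarrow> t powr p * exp (- t\<^sup>2 / (4 * \<sigma>\<^sup>2)) \<le> K0"
    using polyexp_bound[of "4 * \<sigma>\<^sup>2" p] s p by auto
  define \<tau> where "\<tau> = sqrt 2 * \<sigma>"
  have t: "\<tau> > 0" using s by (simp add: \<tau>_def)
  define c where "c = 2 powr (real DIM('a) / 2)"
  have c0: "c \<ge> 0" by (simp add: c_def)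
  have K00: "K0 \<ge> 0" using K0[of 0] p by simp
  have pw: "ennreal (norm (y::'a) powr p * gauss_dens \<sigma> y) \<le> ennreal (c * K0) * ennreal (gauss_dens \<tau> y)" for y
  proof -
    have "norm y powr p * gauss_dens \<sigma> y = c * (norm y powr p * exp (- (norm y)\<^sup>2 / (4 * \<sigma>\<^sup>2))) * gauss_dens \<tau> y"
      unfolding gauss_half[OF s, of y] c_def \<tau>_def by (simp add: ac_simps)
    also have "\<dots> \<le> c * K0 * gauss_dens \<tau> y"
      using K0[of "norm y"] c0 gauss_dens_nonneg[OF t, of y]
      by (intro mult_right_mono mult_left_mono) auto
    finally have "ennreal (norm (y::'a) powr p * gauss_dens \<sigma> y) \<le> ennreal (c * K0 * gauss_dens \<tau> y)"
      by (rule ennreal_leI)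
    also have "\<dots> = ennreal (c * K0) * ennreal (gauss_dens \<tau> y)"
      using c0 K00 gauss_dens_nonneg[OF t, of y] by (simp add: ennreal_mult)
    finally show ?thesis .
  qed
  have "(\<integral>\<^sup>+y. ennreal (norm (y::'a) powr p * gauss_dens \<sigma> y) \<partial>lborel)
     \<le> (\<integral>\<^sup>+y. ennreal (c * K0) * ennreal (gauss_dens \<tau> (y::'a)) \<partial>lborel)"
    by (intro nn_integral_mono pw)
  also have "\<dots> = ennreal (c * K0)"
    by (simp add: nn_integral_cmult gauss_nn_integral[OF t])
  finally show ?thesis by blast
qed

lemma powr_sum_le:
  fixes a b p :: real assumes "a \<ge> 0" "b \<ge> 0" "p \<ge> 0"
  shows "(a + b) powr p \<le> 2 powr p * (a powr p + b powr p)"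
proof -
  have "(a + b) powr p \<le> (2 * max a b) powr p"
    using assms by (intro powr_mono2) auto
  also have "\<dots> = 2 powr p * (max a b) powr p"
    using assms by (simp add: powr_mult)
  also have "\<dots> \<le> 2 powr p * (a powr p + b powr p)"
    using assms by (intro mult_left_mono) (auto simp: max_def)
  finally show ?thesis .
qed

lemma refl_bound:
  fixes x :: "'a::euclidean_space"
  assumes s: "\<sigma> > 0" and p: "p \<ge> 0"
  shows "ennreal (norm x powr p) \<le> 2 * (\<integral>\<^sup>+y. ennreal (norm y powr p * gauss_dens \<sigma> (y - x)) \<partial>lborel)"
proof -
  define I where "I = (\<integral>\<^sup>+y. ennreal (norm y powr p * gauss_dens \<sigma> (y - x)) \<partial>lborel)"
  have I1: "I = (\<integral>\<^sup>+z. ennreal (norm (z + x) powr p * gauss_dens \<sigma> z) \<partial>lborel)"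
    unfolding I_def using nn_integral_translate[of "\<lambda>z. ennreal (norm (z + x) powr p * gauss_dens \<sigma> z)" x]
    by simp
  have gs: "gauss_dens \<sigma> (- z) = gauss_dens \<sigma> z" for z :: 'a
    by (simp add: gauss_dens_def)
  have I2: "I = (\<integral>\<^sup>+z. ennreal (norm (x - z) powr p * gauss_dens \<sigma> z) \<partial>lborel)"
    unfolding I1 using nn_integral_reflect[of "\<lambda>z. ennreal (norm (z + x) powr p * gauss_dens \<sigma> z)"]
    by (simp add: gs add.commute)
  have "2 * I = (\<integral>\<^sup>+z. ennreal (norm (z + x) powr p * gauss_dens \<sigma> z) + ennreal (norm (x - z) powr p * gauss_dens \<sigma> z) \<partial>lborel)"
    by (subst nn_integral_add) (auto simp: I1[symmetric] I2[symmetric] mult_2)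
  also have "\<dots> \<ge> (\<integral>\<^sup>+z. ennreal (norm x powr p) * ennreal (gauss_dens \<sigma> (z::'a)) \<partial>lborel)"
  proof (intro nn_integral_mono)
    fix z :: 'a
    have "2 * norm x \<le> norm (z + x) + norm (x - z)"
    proof -
      have "norm (x + x) = 2 * norm x" by (metis mult_2 norm_scaleR real_norm_def scaleR_2 abs_of_nonneg zero_le_numeral)
      then show ?thesis using norm_triangle_ineq[of "z + x" "x - z"] by simp
    qed
    hence "norm x \<le> max (norm (z + x)) (norm (x - z))" by linarith
    hence "norm x powr p \<le> max (norm (z + x)) (norm (x - z)) powr p"
      using p by (intro powr_mono2) auto
    also have "\<dots> \<le> norm (z + x) powr p + norm (x - z) powr p"
      by (auto simp: max_def)
    finally have "norm x powr p * gauss_dens \<sigma> z \<le> norm (z + x) powr p * gauss_dens \<sigma> z + norm (x - z) powr p * gauss_dens \<sigma> z"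
      using gauss_dens_nonneg[OF s, of z] by (simp add: distrib_right[symmetric] mult_right_mono)
    then show "ennreal (norm x powr p) * ennreal (gauss_dens \<sigma> z) \<le> ennreal (norm (z + x) powr p * gauss_dens \<sigma> z) + ennreal (norm (x - z) powr p * gauss_dens \<sigma> z)"
      using gauss_dens_nonneg[OF s, of z]
      by (simp add: ennreal_mult''[symmetric] ennreal_plus[symmetric] del: ennreal_plus)
  qed
  also have "(\<integral>\<^sup>+z. ennreal (norm x powr p) * ennreal (gauss_dens \<sigma> (z::'a)) \<partial>lborel) = ennreal (norm x powr p)"
    by (simp add: nn_integral_cmult gauss_nn_integral[OF s])
  finally show ?thesis unfolding I_def by simp
qed



lemma gauss_le: assumes "\<sigma> > 0" shows "gauss_dens \<sigma> (y::'a::euclidean_space) \<le> (2 * pi * \<sigma>\<^sup>2) powr (- real DIM('a) / 2)"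
  unfolding gauss_dens_def by (simp add: mult_left_le)

lemma meas_nu:
  assumes S: "sets \<nu> = sets borel" and f: "f \<in> borel_measurable borel"
  shows "f \<in> borel_measurable \<nu>"
  using f by (simp add: measurable_cong_sets[OF S refl])

lemma gauss_pair_meas: "(\<lambda>(y,x). gauss_dens \<sigma> (y - x::'a::euclidean_space)) \<in> borel_measurable (borel \<Otimes>\<^sub>M borel)"
  by measurable

lemma meas_pair_nu:
  fixes \<nu> :: "'a::euclidean_space measure"
  assumes S: "sets \<nu> = sets borel"
  shows "(\<lambda>(y,x). gauss_dens \<sigma> (y - x)) \<in> borel_measurable (lborel \<Otimes>\<^sub>M \<nu>)"
proof -
  have e: "sets (lborel \<Otimes>\<^sub>M \<nu>) = sets (borel \<Otimes>\<^sub>M (borel::'a measure))"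
    using S by (intro sets_pair_measure_cong) auto
  show ?thesis unfolding measurable_cong_sets[OF e refl] by (rule gauss_pair_meas)
qed

lemma mix_integrable:
  fixes \<nu> :: "'a::euclidean_space measure"
  assumes s: "\<sigma> > 0" and P: "prob_space \<nu>" and S: "sets \<nu> = sets borel"
  shows "integrable \<nu> (\<lambda>x. gauss_dens \<sigma> (y - x))"
proof -
  interpret prob_space \<nu> by (rule P)
  show ?thesis
    apply (rule integrable_const_bound[where B="(2 * pi * \<sigma>\<^sup>2) powr (- real DIM('a) / 2)"])
    subgoal by (intro AE_I2) (metis real_norm_def abs_of_nonneg gauss_le[OF s] gauss_dens_nonneg[OF s])
    subgoal by (rule meas_nu[OF S]) measurable
    done
qed

lemma mix_nn:
  fixes \<nu> :: "'a::euclidean_space measure"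
  assumes s: "\<sigma> > 0" and P: "prob_space \<nu>" and S: "sets \<nu> = sets borel"
  shows "ennreal (mix_dens \<sigma> \<nu> y) = (\<integral>\<^sup>+x. ennreal (gauss_dens \<sigma> (y - x)) \<partial>\<nu>)"
  unfolding mix_dens_def
  by (subst nn_integral_eq_integral) (auto simp: mix_integrable[OF s P S] gauss_dens_nonneg[OF s])

lemma mix_nonneg:
  fixes \<nu> :: "'a::euclidean_space measure"
  assumes s: "\<sigma> > 0"
  shows "mix_dens \<sigma> \<nu> y \<ge> 0"
  unfolding mix_dens_def by (intro integral_nonneg_AE) (simp add: gauss_dens_nonneg[OF s])

lemma mix_meas[measurable]:
  fixes \<nu> :: "'a::euclidean_space measure"
  assumes P: "prob_space \<nu>" and S: "sets \<nu> = sets borel"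
  shows "mix_dens \<sigma> \<nu> \<in> borel_measurable borel"
proof -
  interpret prob_space \<nu> by (rule P)
  have "(\<lambda>y. mix_dens \<sigma> \<nu> y) \<in> borel_measurable lborel"
    unfolding mix_dens_def
    by (rule borel_measurable_lebesgue_integral) (use meas_pair_nu[OF S] in simp)
  then show ?thesis by simp
qed

lemma mix_total:
  fixes \<nu> :: "'a::euclidean_space measure"
  assumes s: "\<sigma> > 0" and P: "prob_space \<nu>" and S: "sets \<nu> = sets borel"
  shows "(\<integral>\<^sup>+y. ennreal (mix_dens \<sigma> \<nu> y) \<partial>lborel) = 1"
proof -
  interpret N: prob_space \<nu> by (rule P)
  interpret pair_sigma_finite lborel \<nu> ..
  have m: "(\<lambda>(y,x). ennreal (gauss_dens \<sigma> (y - x))) \<in> borel_measurable (lborel \<Otimes>\<^sub>M \<nu>)"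
    using meas_pair_nu[OF S, of \<sigma>] by (simp add: split_beta')
  have "(\<integral>\<^sup>+y. ennreal (mix_dens \<sigma> \<nu> y) \<partial>lborel) = (\<integral>\<^sup>+y. (\<integral>\<^sup>+x. ennreal (gauss_dens \<sigma> (y - x)) \<partial>\<nu>) \<partial>lborel)"
    by (simp add: mix_nn[OF s P S])
  also have "\<dots> = (\<integral>\<^sup>+x. (\<integral>\<^sup>+y. ennreal (gauss_dens \<sigma> (y - x)) \<partial>lborel) \<partial>\<nu>)"
    by (rule Fubini'[symmetric]) (use m in simp)
  also have "\<dots> = (\<integral>\<^sup>+x. 1 \<partial>\<nu>)"
    by (intro nn_integral_cong) (simp add: nn_integral_translate[where f="\<lambda>z. ennreal (gauss_dens \<sigma> z)"] gauss_nn_integral[OF s])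
  also have "\<dots> = 1" by (simp add: N.emeasure_space_1)
  finally show ?thesis .
qed



lemma proj_closer:
  fixes Y x :: "'a::euclidean_space"
  assumes Y: "norm Y \<le> M" and x: "M < norm x" and M: "0 \<le> M"
  shows "(norm (Y - (M / norm x) *\<^sub>R x))\<^sup>2 < (norm (Y - x))\<^sup>2"
proof -
  define r where "r = norm x"
  define c where "c = M / r"
  define t where "t = Y \<bullet> x"
  have r0: "r > 0" unfolding r_def using x M by linarith
  have cr: "c * r = M" using r0 by (simp add: c_def)
  have c1: "c < 1" using x r0 by (simp add: c_def r_def)
  have tle: "t \<le> M * r"
  proof -
    have "t \<le> norm Y * norm x" unfolding t_def by (rule norm_cauchy_schwarz)
    also have "\<dots> \<le> M * r" using Y by (simp add: r_def mult_right_mono)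
    finally show ?thesis .
  qed
  have e1: "(norm (Y - x))\<^sup>2 = Y \<bullet> Y - 2 * t + r\<^sup>2"
    by (simp add: power2_norm_eq_inner inner_diff_left inner_diff_right t_def r_def inner_commute)
  have e2: "(norm (Y - c *\<^sub>R x))\<^sup>2 = Y \<bullet> Y - 2 * c * t + c\<^sup>2 * r\<^sup>2"
    unfolding power2_norm_eq_inner r_def power_mult_distrib
    by (simp add: inner_diff_left inner_diff_right t_def inner_commute power2_eq_square algebra_simps)
  have "(norm (Y - x))\<^sup>2 - (norm (Y - c *\<^sub>R x))\<^sup>2 = (1 - c) * (r * r + (c * r) * r - 2 * t)"
    unfolding e1 e2 by (simp add: algebra_simps power2_eq_square)
  also have "\<dots> = (1 - c) * (r * r + M * r - 2 * t)" using cr by simp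
  also have "\<dots> > 0"
  proof (rule mult_pos_pos)
    show "0 < 1 - c" using c1 by simp
    have "r * r - M * r > 0" using x r0 by (simp add: r_def algebra_simps mult_strict_right_mono)
    then show "0 < r * r + M * r - 2 * t" using tle by linarith
  qed
  finally show ?thesis unfolding c_def r_def by simp
qed

lemma gauss_strict:
  fixes a b :: "'a::euclidean_space"
  assumes s: "\<sigma> > 0" and "(norm a)\<^sup>2 < (norm b)\<^sup>2"
  shows "gauss_dens \<sigma> b < gauss_dens \<sigma> a"
  unfolding gauss_dens_def using assms by (simp add: divide_strict_right_mono)

lemma gauss_mono:
  fixes a b :: "'a::euclidean_space"
  assumes s: "\<sigma> > 0" and "(norm a)\<^sup>2 \<le> (norm b)\<^sup>2"
  shows "gauss_dens \<sigma> b \<le> gauss_dens \<sigma> a"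
  unfolding gauss_dens_def using assms by (simp add: divide_right_mono)

lemma mix_pos:
  fixes \<nu> :: "'a::euclidean_space measure"
  assumes s: "\<sigma> > 0" and P: "prob_space \<nu>" and S: "sets \<nu> = sets borel"
  shows "mix_dens \<sigma> \<nu> y > 0"
proof -
  interpret prob_space \<nu> by (rule P)
  have "integral\<^sup>L \<nu> (\<lambda>x. 0) < integral\<^sup>L \<nu> (\<lambda>x. gauss_dens \<sigma> (y - x))"
    by (rule integral_less_AE_space) (auto simp: mix_integrable[OF s P S] gauss_dens_pos[OF s] emeasure_space_1)
  then show ?thesis by (simp add: mix_dens_def)
qed



lemma npmle_support:
  fixes Y :: "nat \<Rightarrow> 'a::euclidean_space" and \<nu> :: "'a measure"
  assumes s: "\<sigma> > 0" and N: "npmle_mixing \<sigma> n Y \<nu>" and n: "n \<ge> 1" and M: "M \<ge> 0"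
    and Yb: "\<forall>i<n. norm (Y i) \<le> M"
  shows "AE x in \<nu>. norm x \<le> M"
proof (rule ccontr)
  assume nAE: "\<not> (AE x in \<nu>. norm x \<le> M)"
  have P: "prob_space \<nu>" and S: "sets \<nu> = sets borel"
    and mn: "\<And>\<mu>. \<mu> \<in> mixing_measures \<Longrightarrow> - (\<Sum>i<n. ln (mix_dens \<sigma> \<nu> (Y i))) \<le> - (\<Sum>i<n. ln (mix_dens \<sigma> \<mu> (Y i)))"
    using N unfolding npmle_mixing_def mixing_measures_def by auto
  interpret prob_space \<nu> by (rule P)
  have sp: "space \<nu> = UNIV" using sets_eq_imp_space_eq[OF S] by simp
  define p where "p x = (if norm x \<le> M then x else (M / norm x) *\<^sub>R x)" for x :: 'a
  have pm: "p \<in> borel_measurable borel" unfolding p_def by measurable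
  have pmn: "p \<in> measurable \<nu> borel" using pm by (simp add: measurable_cong_sets[OF S refl])
  define \<mu> where "\<mu> = distr \<nu> borel p"
  have Pmu: "prob_space \<mu>" unfolding \<mu>_def by (rule prob_space_distr[OF pmn])
  have Smu: "sets \<mu> = sets borel" unfolding \<mu>_def by simp
  have mumix: "\<mu> \<in> mixing_measures" using Pmu Smu by (simp add: mixing_measures_def)
  define A where "A = {x::'a. M < norm x}"
  have Aopen: "open A" unfolding A_def by (intro open_Collect_less) (auto intro: continuous_intros)
  have As: "A \<in> sets \<nu>" using Aopen by (simp add: S)
  have Ane: "emeasure \<nu> A \<noteq> 0"
    using nAE AE_iff_measurable[OF As, of "\<lambda>x. norm x \<le> M"] by (auto simp: sp A_def not_le)
  have lt: "mix_dens \<sigma> \<nu> (Y i) < mix_dens \<sigma> \<mu> (Y i)" if i: "i < n" for i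
  proof -
    have gm: "(\<lambda>z. gauss_dens \<sigma> (Y i - z)) \<in> borel_measurable borel" by measurable
    have e: "mix_dens \<sigma> \<mu> (Y i) = integral\<^sup>L \<nu> (\<lambda>x. gauss_dens \<sigma> (Y i - p x))"
      unfolding mix_dens_def \<mu>_def by (rule integral_distr[OF pmn gm])
    have int2: "integrable \<nu> (\<lambda>x. gauss_dens \<sigma> (Y i - p x))"
      using mix_integrable[OF s Pmu Smu, of "Y i"] unfolding \<mu>_def
      by (subst (asm) integrable_distr_eq[OF pmn gm])
    have "integral\<^sup>L \<nu> (\<lambda>x. gauss_dens \<sigma> (Y i - x)) < integral\<^sup>L \<nu> (\<lambda>x. gauss_dens \<sigma> (Y i - p x))"
    proof (rule integral_less_AE[OF mix_integrable[OF s P S] int2 Ane As])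
      show "AE x in \<nu>. x \<in> A \<longrightarrow> gauss_dens \<sigma> (Y i - x) \<noteq> gauss_dens \<sigma> (Y i - p x)"
      proof (intro AE_I2 impI)
        fix x assume "x \<in> A"
        then have xM: "M < norm x" by (simp add: A_def)
        have "gauss_dens \<sigma> (Y i - x) < gauss_dens \<sigma> (Y i - p x)"
          using xM proj_closer[OF _ xM M, of "Y i"] Yb i by (intro gauss_strict[OF s]) (auto simp: p_def)
        then show "gauss_dens \<sigma> (Y i - x) \<noteq> gauss_dens \<sigma> (Y i - p x)" by simp
      qed
      show "AE x in \<nu>. gauss_dens \<sigma> (Y i - x) \<le> gauss_dens \<sigma> (Y i - p x)"
      proof (intro AE_I2)
        fix x
        show "gauss_dens \<sigma> (Y i - x) \<le> gauss_dens \<sigma> (Y i - p x)"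
        proof (cases "norm x \<le> M")
          case True then show ?thesis by (simp add: p_def)
        next
          case False
          then have xM: "M < norm x" by simp
          have "(norm (Y i - p x))\<^sup>2 < (norm (Y i - x))\<^sup>2"
            using xM proj_closer[OF _ xM M, of "Y i"] Yb i by (auto simp: p_def)
          then show ?thesis by (intro gauss_mono[OF s] less_imp_le)
        qed
      qed
    qed
    then show ?thesis unfolding e by (simp add: mix_dens_def)
  qed
  have "(\<Sum>i<n. ln (mix_dens \<sigma> \<nu> (Y i))) < (\<Sum>i<n. ln (mix_dens \<sigma> \<mu> (Y i)))"
  proof (rule sum_strict_mono)
    show "finite {..<n}" by simp
    show "{..<n} \<noteq> {}" using n by (simp add: lessThan_empty_iff)
    fix i assume "i \<in> {..<n}"
    then show "ln (mix_dens \<sigma> \<nu> (Y i)) < ln (mix_dens \<sigma> \<mu> (Y i))"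
      using lt[of i] mix_pos[OF s P S, of "Y i"] by (intro ln_less_cancel_iff[THEN iffD2]) auto
  qed
  with mn[OF mumix] show False by simp
qed



lemma gauss_halfpt:
  fixes y :: "'a::euclidean_space" assumes s: "\<sigma> > 0"
  shows "gauss_dens \<sigma> ((1/2) *\<^sub>R y) = 2 powr real DIM('a) * gauss_dens (2 * \<sigma>) y"
proof -
  have a: "(2 * pi * (2 * \<sigma>)\<^sup>2) powr (- real DIM('a) / 2) = 2 powr (- real DIM('a)) * (2 * pi * \<sigma>\<^sup>2) powr (- real DIM('a) / 2)"
  proof -
    have "2 * pi * (2 * \<sigma>)\<^sup>2 = 4 * (2 * pi * \<sigma>\<^sup>2)" by (simp add: power2_eq_square)
    hence "(2 * pi * (2 * \<sigma>)\<^sup>2) powr (- real DIM('a) / 2) = (4 * (2 * pi * \<sigma>\<^sup>2)) powr (- real DIM('a) / 2)"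
      by simp
    also have "\<dots> = 4 powr (- real DIM('a) / 2) * (2 * pi * \<sigma>\<^sup>2) powr (- real DIM('a) / 2)"
      by (rule powr_mult)
    also have "(4::real) powr (- real DIM('a) / 2) = 2 powr (- real DIM('a))"
    proof -
      have "((2::real) powr 2) powr (- real DIM('a) / 2) = 2 powr (- real DIM('a))" unfolding powr_powr by simp
      moreover have "(2::real) powr 2 = 4" by simp
      ultimately show ?thesis by simp
    qed
    finally show ?thesis .
  qed
  have b: "- (norm ((1/2) *\<^sub>R y))\<^sup>2 / (2 * \<sigma>\<^sup>2) = - (norm y)\<^sup>2 / (2 * (2 * \<sigma>)\<^sup>2)"
    by (simp add: power2_eq_square field_simps)
  have c: "2 powr real DIM('a) * 2 powr (- real DIM('a)) = (1::real)"
    by (simp add: powr_add[symmetric])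
  show ?thesis unfolding gauss_dens_def a
    by (simp only: b mult.assoc[symmetric] c mult_1)
qed

lemma mix_far:
  fixes \<nu> :: "'a::euclidean_space measure"
  assumes s: "\<sigma> > 0" and P: "prob_space \<nu>" and S: "sets \<nu> = sets borel"
    and AEM: "AE x in \<nu>. norm x \<le> M" and y: "2 * M \<le> norm y"
  shows "mix_dens \<sigma> \<nu> y \<le> 2 powr real DIM('a) * gauss_dens (2 * \<sigma>) y"
proof -
  interpret prob_space \<nu> by (rule P)
  have "mix_dens \<sigma> \<nu> y \<le> integral\<^sup>L \<nu> (\<lambda>x. 2 powr real DIM('a) * gauss_dens (2 * \<sigma>) y)"
    unfolding mix_dens_def
  proof (rule integral_mono_AE[OF mix_integrable[OF s P S]])
    show "integrable \<nu> (\<lambda>x. 2 powr real DIM('a) * gauss_dens (2 * \<sigma>) y)" by simp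
    show "AE x in \<nu>. gauss_dens \<sigma> (y - x) \<le> 2 powr real DIM('a) * gauss_dens (2 * \<sigma>) y"
      using AEM
    proof eventually_elim
      case (elim x)
      have "norm ((1/2) *\<^sub>R y) \<le> norm (y - x)"
        using norm_triangle_ineq2[of y x] elim y by simp
      hence "(norm ((1/2) *\<^sub>R y))\<^sup>2 \<le> (norm (y - x))\<^sup>2" by (simp add: power_mono)
      hence "gauss_dens \<sigma> (y - x) \<le> gauss_dens \<sigma> ((1/2) *\<^sub>R y)" by (rule gauss_mono[OF s])
      then show ?case by (simp add: gauss_halfpt[OF s])
    qed
  qed
  also have "\<dots> = 2 powr real DIM('a) * gauss_dens (2 * \<sigma>) y" by (simp add: prob_space)
  finally show ?thesis .
qed

lemma moment_via_mix:
  fixes \<nu> :: "'a::euclidean_space measure"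
  assumes s: "\<sigma> > 0" and P: "prob_space \<nu>" and S: "sets \<nu> = sets borel" and p: "p \<ge> 0"
  shows "(\<integral>\<^sup>+x. ennreal (norm x powr p) \<partial>\<nu>) \<le> 2 * (\<integral>\<^sup>+y. ennreal (norm y powr p * mix_dens \<sigma> \<nu> y) \<partial>lborel)"
proof -
  interpret N: prob_space \<nu> by (rule P)
  interpret pair_sigma_finite lborel \<nu> ..
  have m: "(\<lambda>(y,x). ennreal (norm y powr p * gauss_dens \<sigma> (y - x))) \<in> borel_measurable (lborel \<Otimes>\<^sub>M \<nu>)"
  proof -
    have e: "sets (lborel \<Otimes>\<^sub>M \<nu>) = sets (borel \<Otimes>\<^sub>M (borel::'a measure))"
      using S by (intro sets_pair_measure_cong) auto
    have "(\<lambda>(y,x). ennreal (norm y powr p * gauss_dens \<sigma> (y - x))) \<in> borel_measurable (borel \<Otimes>\<^sub>M (borel::'a measure))"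
      by measurable
    then show ?thesis unfolding measurable_cong_sets[OF e refl] .
  qed
  have "(\<integral>\<^sup>+x. ennreal (norm x powr p) \<partial>\<nu>) \<le> (\<integral>\<^sup>+x. 2 * (\<integral>\<^sup>+y. ennreal (norm y powr p * gauss_dens \<sigma> (y - x)) \<partial>lborel) \<partial>\<nu>)"
    by (intro nn_integral_mono refl_bound[OF s p])
  also have "\<dots> = 2 * (\<integral>\<^sup>+x. (\<integral>\<^sup>+y. ennreal (norm y powr p * gauss_dens \<sigma> (y - x)) \<partial>lborel) \<partial>\<nu>)"
    by (rule nn_integral_cmult) (use m in simp)
  also have "(\<integral>\<^sup>+x. (\<integral>\<^sup>+y. ennreal (norm y powr p * gauss_dens \<sigma> (y - x)) \<partial>lborel) \<partial>\<nu>)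
     = (\<integral>\<^sup>+y. (\<integral>\<^sup>+x. ennreal (norm y powr p * gauss_dens \<sigma> (y - x)) \<partial>\<nu>) \<partial>lborel)"
    by (rule Fubini') (use m in simp)
  also have "\<dots> = (\<integral>\<^sup>+y. ennreal (norm y powr p * mix_dens \<sigma> \<nu> y) \<partial>lborel)"
  proof (intro nn_integral_cong)
    fix y :: 'a
    have "(\<integral>\<^sup>+x. ennreal (norm y powr p * gauss_dens \<sigma> (y - x)) \<partial>\<nu>) = (\<integral>\<^sup>+x. ennreal (norm y powr p) * ennreal (gauss_dens \<sigma> (y - x)) \<partial>\<nu>)"
      by (intro nn_integral_cong) (simp add: ennreal_mult gauss_dens_nonneg[OF s])
    also have "\<dots> = ennreal (norm y powr p) * (\<integral>\<^sup>+x. ennreal (gauss_dens \<sigma> (y - x)) \<partial>\<nu>)"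
      by (rule nn_integral_cmult) (rule meas_nu[OF S], measurable)
    also have "\<dots> = ennreal (norm y powr p * mix_dens \<sigma> \<nu> y)"
      by (simp add: mix_nn[OF s P S] ennreal_mult mix_nonneg[OF s])
    finally show "(\<integral>\<^sup>+x. ennreal (norm y powr p * gauss_dens \<sigma> (y - x)) \<partial>\<nu>) = ennreal (norm y powr p * mix_dens \<sigma> \<nu> y)" .
  qed
  finally show ?thesis .
qed




lemma ineq1: "(b::real)^2 \<le> 2*a^2 + 2*(a-b)^2"
proof -
  have "0 \<le> (2*a-b)^2" by simp
  then show ?thesis unfolding power2_eq_square by (simp add: algebra_simps)
qed
lemma ineq2: "((a::real)-b)^2 \<le> 2*a^2 + 2*b^2"
proof -
  have "0 \<le> (a+b)^2" by simp
  then show ?thesis unfolding power2_eq_square by (simp add: algebra_simps)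
qed

lemma det_bound:
  fixes \<nu> :: "'a::euclidean_space measure" and f :: "'a \<Rightarrow> real"
  assumes s: "\<sigma> > 0" and P: "prob_space \<nu>" and S: "sets \<nu> = sets borel" and p: "p \<ge> 0"
    and AEM: "AE x in \<nu>. norm x \<le> M" and M0: "M \<ge> 0"
    and f0: "\<And>y. f y \<ge> 0" and fm[measurable]: "f \<in> borel_measurable borel" and fi: "integrable lborel f"
    and CB: "(\<integral>\<^sup>+y. ennreal (norm y powr p * f y) \<partial>lborel) \<le> ennreal CB" and CB0: "CB \<ge> 0"
    and K2: "(\<integral>\<^sup>+y. ennreal (norm y powr p * gauss_dens (2 * \<sigma>) (y::'a)) \<partial>lborel) \<le> ennreal K2" and K20: "K2 \<ge> 0"
    and H: "hellinger f (mix_dens \<sigma> \<nu>) \<le> h" and h0: "h \<ge> 0"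
  shows "(\<integral>\<^sup>+x. ennreal (norm x powr p) \<partial>\<nu>) \<le> ennreal (2 * (2 * CB + 2 * (2*M) powr p * h\<^sup>2 + 2 powr real DIM('a) * K2))"
proof -
  define F where "F = mix_dens \<sigma> \<nu>"
  define D where "D y = (sqrt (f y) - sqrt (F y))\<^sup>2" for y
  have Fm[measurable]: "F \<in> borel_measurable borel" unfolding F_def by (rule mix_meas[OF P S])
  have F0: "F y \<ge> 0" for y unfolding F_def by (rule mix_nonneg[OF s])
  have Fi: "integrable lborel F"
    by (rule integrableI_nonneg) (auto simp: F0 mix_total[OF s P S] F_def[symmetric], simp add: F_def mix_total[OF s P S])
  have Dm[measurable]: "D \<in> borel_measurable borel" unfolding D_def by measurable
  have D0: "D y \<ge> 0" for y unfolding D_def by simp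
  have FD: "F y \<le> 2 * f y + 2 * D y" for y
  proof -
    have "(sqrt (F y))\<^sup>2 \<le> 2 * (sqrt (f y))\<^sup>2 + 2 * (sqrt (f y) - sqrt (F y))\<^sup>2"
      by (rule ineq1)
    then show ?thesis using F0[of y] f0[of y] by (simp add: D_def)
  qed
  have Dle: "D y \<le> 2 * f y + 2 * F y" for y
  proof -
    have "(sqrt (f y) - sqrt (F y))\<^sup>2 \<le> 2 * (sqrt (f y))\<^sup>2 + 2 * (sqrt (F y))\<^sup>2"
      by (rule ineq2)
    then show ?thesis using F0[of y] f0[of y] by (simp add: D_def)
  qed
  have Di: "integrable lborel D"
  proof (rule Bochner_Integration.integrable_bound[where f="\<lambda>y. 2 * f y + 2 * F y"])
    show "integrable lborel (\<lambda>y. 2 * f y + 2 * F y)" using fi Fi by simp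
    show "D \<in> borel_measurable lborel" by simp
    show "AE y in lborel. norm (D y) \<le> norm (2 * f y + 2 * F y)"
      using Dle D0 F0 f0 by (intro AE_I2) (simp add: abs_of_nonneg add_nonneg_nonneg)
  qed
  have IDh: "integral\<^sup>L lborel D \<le> h\<^sup>2"
  proof -
    have I0: "integral\<^sup>L lborel D \<ge> 0" by (intro integral_nonneg_AE) (simp add: D0)
    have Deq: "D = (\<lambda>y. (sqrt (f y) - sqrt (F y))\<^sup>2)" by (rule ext) (simp add: D_def)
    have "sqrt (integral\<^sup>L lborel D) \<le> h" using H by (simp add: hellinger_def Deq F_def)
    hence "(sqrt (integral\<^sup>L lborel D))\<^sup>2 \<le> h\<^sup>2" using I0 by (intro power_mono) auto
    then show ?thesis using I0 by simp
  qed
  have ND: "(\<integral>\<^sup>+y. ennreal (D y) \<partial>lborel) \<le> ennreal (h\<^sup>2)"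
    using IDh by (subst nn_integral_eq_integral[OF Di]) (auto simp: D0)
  define c1 where "c1 = 2 * (2*M) powr p"
  define c2 where "c2 = (2::real) powr real DIM('a)"
  have c10: "c1 \<ge> 0" and c20: "c2 \<ge> 0" by (auto simp: c1_def c2_def)
  have pw: "norm y powr p * F y \<le> 2 * (norm y powr p * f y) + c1 * D y + c2 * (norm y powr p * gauss_dens (2 * \<sigma>) y)" for y
  proof (cases "norm y < 2 * M")
    case True
    have "norm y powr p \<le> (2*M) powr p" using True p by (intro powr_mono2) auto
    hence a: "norm y powr p * D y \<le> (2*M) powr p * D y" using D0[of y] by (rule mult_right_mono)
    have "norm y powr p * F y \<le> norm y powr p * (2 * f y + 2 * D y)"
      using FD[of y] by (intro mult_left_mono) auto
    also have "\<dots> = 2 * (norm y powr p * f y) + 2 * (norm y powr p * D y)" by (simp add: algebra_simps)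
    also have "\<dots> \<le> 2 * (norm y powr p * f y) + c1 * D y" using a by (simp add: c1_def)
    also have "\<dots> \<le> 2 * (norm y powr p * f y) + c1 * D y + c2 * (norm y powr p * gauss_dens (2 * \<sigma>) y)"
      using c20 gauss_dens_nonneg[of "2*\<sigma>" y] s by simp
    finally show ?thesis .
  next
    case False
    have "F y \<le> c2 * gauss_dens (2 * \<sigma>) y"
      unfolding F_def c2_def using False by (intro mix_far[OF s P S AEM]) simp
    hence "norm y powr p * F y \<le> norm y powr p * (c2 * gauss_dens (2 * \<sigma>) y)"
      by (intro mult_left_mono) auto
    hence "norm y powr p * F y \<le> c2 * (norm y powr p * gauss_dens (2 * \<sigma>) y)"
      by (simp add: mult.left_commute)
    moreover have "0 \<le> 2 * (norm y powr p * f y) + c1 * D y"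
      using f0[of y] D0[of y] c10 by simp
    ultimately show ?thesis by linarith
  qed
  have "(\<integral>\<^sup>+y. ennreal (norm y powr p * F y) \<partial>lborel)
     \<le> (\<integral>\<^sup>+y. ennreal 2 * ennreal (norm y powr p * f y) + ennreal c1 * ennreal (D y) + ennreal c2 * ennreal (norm y powr p * gauss_dens (2 * \<sigma>) (y::'a)) \<partial>lborel)"
  proof (intro nn_integral_mono)
    fix y
    have "ennreal (norm y powr p * F y) \<le> ennreal (2 * (norm y powr p * f y) + c1 * D y + c2 * (norm y powr p * gauss_dens (2 * \<sigma>) y))"
      by (rule ennreal_leI[OF pw])
    also have "\<dots> = ennreal 2 * ennreal (norm y powr p * f y) + ennreal c1 * ennreal (D y) + ennreal c2 * ennreal (norm y powr p * gauss_dens (2 * \<sigma>) y)"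
    proof -
      have g0: "0 \<le> gauss_dens (2 * \<sigma>) y" using gauss_dens_nonneg[of "2*\<sigma>" y] s by simp
      have t1: "0 \<le> norm y powr p * f y" using f0[of y] by simp
      have t3: "0 \<le> norm y powr p * gauss_dens (2 * \<sigma>) y" using g0 by simp
      have t2: "0 \<le> c1 * D y" using c10 D0[of y] by simp
      have t3': "0 \<le> c2 * (norm y powr p * gauss_dens (2 * \<sigma>) y)" using c20 t3 by simp
      have "ennreal (2 * (norm y powr p * f y) + c1 * D y + c2 * (norm y powr p * gauss_dens (2 * \<sigma>) y))
          = ennreal (2 * (norm y powr p * f y)) + ennreal (c1 * D y) + ennreal (c2 * (norm y powr p * gauss_dens (2 * \<sigma>) y))"
        using t1 t2 t3' by (simp add: ennreal_plus[symmetric] del: ennreal_plus)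
      also have "\<dots> = ennreal 2 * ennreal (norm y powr p * f y) + ennreal c1 * ennreal (D y) + ennreal c2 * ennreal (norm y powr p * gauss_dens (2 * \<sigma>) y)"
        using t1 t3 c10 c20 D0[of y] by (simp add: ennreal_mult)
      finally show ?thesis .
    qed
    finally show "ennreal (norm y powr p * F y) \<le> \<dots>" .
  qed
  also have "\<dots> = ennreal 2 * (\<integral>\<^sup>+y. ennreal (norm y powr p * f y) \<partial>lborel) + ennreal c1 * (\<integral>\<^sup>+y. ennreal (D y) \<partial>lborel)
       + ennreal c2 * (\<integral>\<^sup>+y. ennreal (norm y powr p * gauss_dens (2 * \<sigma>) (y::'a)) \<partial>lborel)"
    by (simp add: nn_integral_add nn_integral_cmult)
  also have "\<dots> \<le> ennreal 2 * ennreal CB + ennreal c1 * ennreal (h\<^sup>2) + ennreal c2 * ennreal K2"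
    by (intro add_mono mult_left_mono CB ND K2) auto
  also have "\<dots> = ennreal (2 * CB + c1 * h\<^sup>2 + c2 * K2)"
  proof -
    have a: "0 \<le> c1 * h\<^sup>2" "0 \<le> c2 * K2" "0 \<le> 2 * CB" using CB0 K20 c10 c20 by auto
    have "ennreal (2 * CB + c1 * h\<^sup>2 + c2 * K2) = ennreal (2 * CB) + ennreal (c1 * h\<^sup>2) + ennreal (c2 * K2)"
      using a by (simp add: ennreal_plus[symmetric] del: ennreal_plus)
    also have "\<dots> = ennreal 2 * ennreal CB + ennreal c1 * ennreal (h\<^sup>2) + ennreal c2 * ennreal K2"
      using CB0 K20 c10 c20 by (simp add: ennreal_mult)
    finally show ?thesis by simp
  qed
  finally have I: "(\<integral>\<^sup>+y. ennreal (norm y powr p * F y) \<partial>lborel) \<le> ennreal (2 * CB + c1 * h\<^sup>2 + c2 * K2)" .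
  have "(\<integral>\<^sup>+x. ennreal (norm x powr p) \<partial>\<nu>) \<le> 2 * (\<integral>\<^sup>+y. ennreal (norm y powr p * F y) \<partial>lborel)"
    unfolding F_def by (rule moment_via_mix[OF s P S p])
  also have "\<dots> \<le> 2 * ennreal (2 * CB + c1 * h\<^sup>2 + c2 * K2)" by (intro mult_left_mono I) auto
  also have "\<dots> = ennreal (2 * (2 * CB + c1 * h\<^sup>2 + c2 * K2))"
    using ennreal_mult[of 2 "2 * CB + c1 * h\<^sup>2 + c2 * K2"] CB0 K20 c10 c20 by simp
  finally show ?thesis by (simp add: c1_def c2_def mult.assoc)
qed



lemma emp_nonneg: "\<sigma> > 0 \<Longrightarrow> emp_mix_dens \<sigma> \<theta> n y \<ge> 0"
  unfolding emp_mix_dens_def by (simp add: sum_nonneg gauss_dens_nonneg)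

lemma emp_meas[measurable]: "emp_mix_dens \<sigma> \<theta> n \<in> borel_measurable borel"
  unfolding emp_mix_dens_def by measurable

lemma emp_integral:
  fixes \<theta> :: "nat \<Rightarrow> 'a::euclidean_space" and w :: "'a \<Rightarrow> ennreal"
  assumes s: "\<sigma> > 0" and w[measurable]: "w \<in> borel_measurable borel"
  shows "(\<integral>\<^sup>+y. ennreal (emp_mix_dens \<sigma> \<theta> n y) * w y \<partial>lborel)
    = ennreal (1 / real n) * (\<Sum>i<n. \<integral>\<^sup>+y. ennreal (gauss_dens \<sigma> (y - \<theta> i)) * w y \<partial>lborel)"
proof -
  have "(\<integral>\<^sup>+y. ennreal (emp_mix_dens \<sigma> \<theta> n y) * w y \<partial>lborel)
      = (\<integral>\<^sup>+y. ennreal (1 / real n) * (\<Sum>i<n. ennreal (gauss_dens \<sigma> (y - \<theta> i)) * w y) \<partial>lborel)"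
  proof (intro nn_integral_cong)
    fix y
    have "ennreal (emp_mix_dens \<sigma> \<theta> n y) = ennreal (1 / real n) * (\<Sum>i<n. ennreal (gauss_dens \<sigma> (y - \<theta> i)))"
    proof -
      have S0: "0 \<le> (\<Sum>i<n. gauss_dens \<sigma> (y - \<theta> i))" by (simp add: sum_nonneg gauss_dens_nonneg[OF s])
      have "ennreal (emp_mix_dens \<sigma> \<theta> n y) = ennreal (1 / real n) * ennreal (\<Sum>i<n. gauss_dens \<sigma> (y - \<theta> i))"
        unfolding emp_mix_dens_def by (rule ennreal_mult) (use S0 in simp_all)
      also have "ennreal (\<Sum>i<n. gauss_dens \<sigma> (y - \<theta> i)) = (\<Sum>i<n. ennreal (gauss_dens \<sigma> (y - \<theta> i)))"
        by (rule sum_ennreal[symmetric]) (simp add: gauss_dens_nonneg[OF s])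
      finally show ?thesis .
    qed
    then show "ennreal (emp_mix_dens \<sigma> \<theta> n y) * w y = ennreal (1 / real n) * (\<Sum>i<n. ennreal (gauss_dens \<sigma> (y - \<theta> i)) * w y)"
      by (simp add: sum_distrib_right mult.assoc)
  qed
  also have "\<dots> = ennreal (1 / real n) * (\<Sum>i<n. \<integral>\<^sup>+y. ennreal (gauss_dens \<sigma> (y - \<theta> i)) * w y \<partial>lborel)"
    by (simp add: nn_integral_cmult nn_integral_sum)
  finally show ?thesis .
qed

lemma emp_avg_bound:
  fixes c :: real
  assumes n: "n \<ge> 1" and c: "c \<ge> 0" and b: "\<And>i. i < n \<Longrightarrow> X i \<le> ennreal c"
  shows "ennreal (1 / real n) * (\<Sum>i<n. X i) \<le> ennreal c"
proof -
  have "(\<Sum>i<n. X i) \<le> (\<Sum>i<n. ennreal c)" by (intro sum_mono b) simp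
  also have "\<dots> = ennreal (real n * c)" using c by (simp add: ennreal_mult ennreal_of_nat_eq_real_of_nat)
  finally have "ennreal (1 / real n) * (\<Sum>i<n. X i) \<le> ennreal (1 / real n) * ennreal (real n * c)"
    by (intro mult_left_mono) auto
  also have "\<dots> = ennreal c" using n c by (simp add: ennreal_mult[symmetric])
  finally show ?thesis .
qed

lemma emp_total:
  fixes \<theta> :: "nat \<Rightarrow> 'a::euclidean_space"
  assumes s: "\<sigma> > 0" and n: "n \<ge> 1"
  shows "(\<integral>\<^sup>+y. ennreal (emp_mix_dens \<sigma> \<theta> n y) \<partial>lborel) = 1"
proof -
  have "(\<integral>\<^sup>+y. ennreal (emp_mix_dens \<sigma> \<theta> n y) * 1 \<partial>lborel)
    = ennreal (1 / real n) * (\<Sum>i<n. \<integral>\<^sup>+y. ennreal (gauss_dens \<sigma> (y - \<theta> i)) * 1 \<partial>lborel)"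
    by (rule emp_integral[OF s]) simp
  also have "\<dots> = ennreal (1 / real n) * (\<Sum>i<n. 1)"
    by (simp add: nn_integral_translate[where f="\<lambda>z. ennreal (gauss_dens \<sigma> z)"] gauss_nn_integral[OF s])
  also have "\<dots> = 1" using n by (simp add: ennreal_of_nat_eq_real_of_nat ennreal_mult[symmetric])
  finally show ?thesis by simp
qed

lemma shifted_moment:
  fixes x :: "'a::euclidean_space"
  assumes s: "\<sigma> > 0" and p: "p \<ge> 0" and xB: "norm x \<le> B"
    and K: "(\<integral>\<^sup>+z. ennreal (norm (z::'a) powr p * gauss_dens \<sigma> z) \<partial>lborel) \<le> ennreal K" and K0: "K \<ge> 0"
  shows "(\<integral>\<^sup>+y. ennreal (gauss_dens \<sigma> (y - x)) * ennreal (norm y powr p) \<partial>lborel) \<le> ennreal (2 powr p * (K + B powr p))"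
proof -
  have B0: "B \<ge> 0" using xB norm_ge_zero[of x] by linarith
  have "(\<integral>\<^sup>+y. ennreal (gauss_dens \<sigma> (y - x)) * ennreal (norm y powr p) \<partial>lborel)
     \<le> (\<integral>\<^sup>+y. ennreal (2 powr p) * (ennreal (norm (y - x) powr p * gauss_dens \<sigma> (y - x)) + ennreal (B powr p) * ennreal (gauss_dens \<sigma> (y - x))) \<partial>lborel)"
  proof (intro nn_integral_mono)
    fix y
    have "norm y \<le> norm (y - x) + B" using norm_triangle_ineq[of "y - x" x] xB by simp
    hence "norm y powr p \<le> (norm (y - x) + B) powr p" using p by (intro powr_mono2) auto
    also have "\<dots> \<le> 2 powr p * (norm (y - x) powr p + B powr p)" by (rule powr_sum_le) (use B0 p in auto)
    finally have "gauss_dens \<sigma> (y - x) * norm y powr p \<le> gauss_dens \<sigma> (y - x) * (2 powr p * (norm (y - x) powr p + B powr p))"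
      using gauss_dens_nonneg[OF s, of "y - x"] by (intro mult_left_mono)
    also have "\<dots> = 2 powr p * (norm (y - x) powr p * gauss_dens \<sigma> (y - x) + B powr p * gauss_dens \<sigma> (y - x))"
      by (simp add: algebra_simps)
    finally have "gauss_dens \<sigma> (y - x) * norm y powr p \<le> 2 powr p * (norm (y - x) powr p * gauss_dens \<sigma> (y - x) + B powr p * gauss_dens \<sigma> (y - x))" .
    hence "ennreal (gauss_dens \<sigma> (y - x) * norm y powr p) \<le> ennreal (2 powr p * (norm (y - x) powr p * gauss_dens \<sigma> (y - x) + B powr p * gauss_dens \<sigma> (y - x)))"
      by (rule ennreal_leI)
    then show "ennreal (gauss_dens \<sigma> (y - x)) * ennreal (norm y powr p) \<le> ennreal (2 powr p) * (ennreal (norm (y - x) powr p * gauss_dens \<sigma> (y - x)) + ennreal (B powr p) * ennreal (gauss_dens \<sigma> (y - x)))"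
      using gauss_dens_nonneg[OF s, of "y - x"]
      by (simp add: ennreal_mult[symmetric] ennreal_plus[symmetric] del: ennreal_plus)
  qed
  also have "\<dots> = ennreal (2 powr p) * ((\<integral>\<^sup>+y. ennreal (norm (y - x) powr p * gauss_dens \<sigma> (y - x)) \<partial>lborel) + ennreal (B powr p) * (\<integral>\<^sup>+y. ennreal (gauss_dens \<sigma> (y - x)) \<partial>lborel))"
    by (simp add: nn_integral_cmult nn_integral_add)
  also have "(\<integral>\<^sup>+y. ennreal (norm (y - x) powr p * gauss_dens \<sigma> (y - x)) \<partial>lborel) = (\<integral>\<^sup>+z. ennreal (norm (z::'a) powr p * gauss_dens \<sigma> z) \<partial>lborel)"
    by (rule nn_integral_translate[where f="\<lambda>z. ennreal (norm (z::'a) powr p * gauss_dens \<sigma> z)"]) simp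
  also have "(\<integral>\<^sup>+y. ennreal (gauss_dens \<sigma> (y - x)) \<partial>lborel) = 1"
    by (simp add: nn_integral_translate[where f="\<lambda>z. ennreal (gauss_dens \<sigma> z)"] gauss_nn_integral[OF s])
  also have "ennreal (2 powr p) * ((\<integral>\<^sup>+z. ennreal (norm (z::'a) powr p * gauss_dens \<sigma> z) \<partial>lborel) + ennreal (B powr p) * 1)
     \<le> ennreal (2 powr p) * (ennreal K + ennreal (B powr p))"
    by (intro mult_left_mono add_mono K) auto
  also have "\<dots> = ennreal (2 powr p * (K + B powr p))"
    using K0 B0 by (simp add: ennreal_mult[symmetric] ennreal_plus[symmetric] del: ennreal_plus)
  finally show ?thesis .
qed



lemma emp_moment:
  fixes \<theta> :: "nat \<Rightarrow> 'a::euclidean_space"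
  assumes s: "\<sigma> > 0" and n: "n \<ge> 1" and p: "p \<ge> 0" and B: "\<forall>i<n. norm (\<theta> i) \<le> B"
    and K: "(\<integral>\<^sup>+z. ennreal (norm (z::'a) powr p * gauss_dens \<sigma> z) \<partial>lborel) \<le> ennreal K" and K0: "K \<ge> 0"
    and B0: "B \<ge> 0"
  shows "(\<integral>\<^sup>+y. ennreal (norm y powr p * emp_mix_dens \<sigma> \<theta> n y) \<partial>lborel) \<le> ennreal (2 powr p * (K + B powr p))"
proof -
  have "(\<integral>\<^sup>+y. ennreal (norm y powr p * emp_mix_dens \<sigma> \<theta> n y) \<partial>lborel)
      = (\<integral>\<^sup>+y. ennreal (emp_mix_dens \<sigma> \<theta> n y) * ennreal (norm y powr p) \<partial>lborel)"
    by (intro nn_integral_cong) (simp add: ennreal_mult[symmetric] emp_nonneg[OF s] mult.commute)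
  also have "\<dots> = ennreal (1 / real n) * (\<Sum>i<n. \<integral>\<^sup>+y. ennreal (gauss_dens \<sigma> (y - \<theta> i)) * ennreal (norm y powr p) \<partial>lborel)"
    by (rule emp_integral[OF s]) measurable
  also have "\<dots> \<le> ennreal (2 powr p * (K + B powr p))"
    by (rule emp_avg_bound[OF n]) (use K0 B0 in \<open>auto intro!: shifted_moment[OF s p _ K K0] simp: B\<close>)
  finally show ?thesis .
qed

lemma emp_tail:
  fixes \<theta> :: "nat \<Rightarrow> 'a::euclidean_space"
  assumes s: "\<sigma> > 0" and n: "n \<ge> 1" and B: "\<forall>i<n. norm (\<theta> i) \<le> B" and u: "u \<ge> 0"
  shows "(\<integral>\<^sup>+y. ennreal (emp_mix_dens \<sigma> \<theta> n y) * indicator {y. B + u < norm y} y \<partial>lborel)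
     \<le> ennreal (2 powr (real DIM('a) / 2) * exp (- u\<^sup>2 / (4 * \<sigma>\<^sup>2)))"
proof -
  have "(\<integral>\<^sup>+y. ennreal (emp_mix_dens \<sigma> \<theta> n y) * indicator {y. B + u < norm y} y \<partial>lborel)
    = ennreal (1 / real n) * (\<Sum>i<n. \<integral>\<^sup>+y. ennreal (gauss_dens \<sigma> (y - \<theta> i)) * indicator {y. B + u < norm y} y \<partial>lborel)"
    by (rule emp_integral[OF s]) measurable
  also have "\<dots> \<le> ennreal (2 powr (real DIM('a) / 2) * exp (- u\<^sup>2 / (4 * \<sigma>\<^sup>2)))"
  proof (rule emp_avg_bound[OF n])
    show "0 \<le> 2 powr (real DIM('a) / 2) * exp (- u\<^sup>2 / (4 * \<sigma>\<^sup>2))" by simp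
    fix i assume i: "i < n"
    have "(\<integral>\<^sup>+y. ennreal (gauss_dens \<sigma> (y - \<theta> i)) * indicator {y. B + u < norm y} y \<partial>lborel)
       \<le> (\<integral>\<^sup>+y. indicator {z. u \<le> norm z} (y - \<theta> i) * ennreal (gauss_dens \<sigma> (y - \<theta> i)) \<partial>lborel)"
    proof (intro nn_integral_mono)
      fix y :: 'a
      show "ennreal (gauss_dens \<sigma> (y - \<theta> i)) * indicator {y. B + u < norm y} y \<le> indicator {z. u \<le> norm z} (y - \<theta> i) * ennreal (gauss_dens \<sigma> (y - \<theta> i))"
      proof (cases "B + u < norm y")
        case True
        have "norm y \<le> norm (y - \<theta> i) + norm (\<theta> i)" using norm_triangle_ineq[of "y - \<theta> i" "\<theta> i"] by simp
        then have "u \<le> norm (y - \<theta> i)" using True B i by fastforce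
        then show ?thesis using True by (simp add: indicator_def)
      qed (simp add: indicator_def)
    qed
    also have "\<dots> = (\<integral>\<^sup>+z. indicator {z. u \<le> norm z} z * ennreal (gauss_dens \<sigma> (z::'a)) \<partial>lborel)"
      by (rule nn_integral_translate[where f="\<lambda>z. indicator {z. u \<le> norm z} z * ennreal (gauss_dens \<sigma> (z::'a))"]) measurable
    also have "\<dots> \<le> ennreal (2 powr (real DIM('a) / 2) * exp (- u\<^sup>2 / (4 * \<sigma>\<^sup>2)))"
      by (rule gauss_tail[OF s u])
    finally show "(\<integral>\<^sup>+y. ennreal (gauss_dens \<sigma> (y - \<theta> i)) * indicator {y. B + u < norm y} y \<partial>lborel) \<le> \<dots>" .
  qed
  finally show ?thesis .
qed

lemma emp_integrable:
  fixes \<theta> :: "nat \<Rightarrow> 'a::euclidean_space"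
  assumes s: "\<sigma> > 0" and n: "n \<ge> 1"
  shows "integrable lborel (emp_mix_dens \<sigma> \<theta> n)"
  by (rule integrableI_nonneg) (auto simp: emp_nonneg[OF s] emp_total[OF s n])

lemma pi_union_bound:
  assumes D: "prob_space D" and A: "A \<in> sets D"
  shows "measure (PiM {..<n} (\<lambda>_. D)) {\<omega> \<in> space (PiM {..<n} (\<lambda>_. D)). \<exists>i<n. \<omega> i \<in> A} \<le> real n * measure D A"
proof -
  interpret D: prob_space D by (rule D)
  interpret product_prob_space "\<lambda>_. D" "{..<n}" by unfold_locales
  let ?P = "PiM {..<n} (\<lambda>_. D)"
  have eq: "{\<omega> \<in> space ?P. \<exists>i<n. \<omega> i \<in> A} = (\<Union>i\<in>{..<n}. {\<omega> \<in> space ?P. \<omega> i \<in> A})" by auto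
  have sets: "(\<lambda>i. {\<omega> \<in> space ?P. \<omega> i \<in> A}) ` {..<n} \<subseteq> sets ?P"
    using A by auto
  have "measure ?P {\<omega> \<in> space ?P. \<exists>i<n. \<omega> i \<in> A} \<le> (\<Sum>i\<in>{..<n}. measure ?P {\<omega> \<in> space ?P. \<omega> i \<in> A})"
    unfolding eq by (rule P.finite_measure_subadditive_finite[OF _ sets]) simp
  also have "\<dots> = (\<Sum>i\<in>{..<n}. measure D A)"
  proof (intro sum.cong refl)
    fix i assume "i \<in> {..<n}"
    then have "emeasure ?P {\<omega> \<in> space ?P. \<omega> i \<in> A} = emeasure D A"
      using A by (intro emeasure_PiM_Collect_single) auto
    then show "measure ?P {\<omega> \<in> space ?P. \<omega> i \<in> A} = measure D A"
      by (simp add: measure_def)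
  qed
  also have "\<dots> = real n * measure D A" by simp
  finally show ?thesis .
qed



lemma moment_le_M:
  assumes P: "prob_space \<nu>" and AEM: "AE x in \<nu>. norm x \<le> M" and p: "p \<ge> 0"
  shows "(\<integral>\<^sup>+x. ennreal (norm x powr p) \<partial>\<nu>) \<le> ennreal (M powr p)"
proof -
  interpret prob_space \<nu> by (rule P)
  have "(\<integral>\<^sup>+x. ennreal (norm x powr p) \<partial>\<nu>) \<le> (\<integral>\<^sup>+x. ennreal (M powr p) \<partial>\<nu>)"
    using AEM by (intro nn_integral_mono_AE) (auto elim!: eventually_mono intro!: ennreal_leI powr_mono2 p)
  also have "\<dots> = ennreal (M powr p)" by (simp add: emeasure_space_1)
  finally show ?thesis .
qed

lemma min_sq_le: fixes K h :: real assumes "K \<ge> 0" "h \<ge> 0"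
  shows "min 1 (K * h\<^sup>2) \<le> sqrt K * h"
proof (cases "sqrt K * h \<ge> 1")
  case True then show ?thesis by simp
next
  case False
  have "K * h\<^sup>2 = (sqrt K * h)\<^sup>2" using assms by (simp add: power_mult_distrib)
  also have "\<dots> \<le> sqrt K * h" using False assms by (simp add: power2_eq_square mult_left_le)
  finally show ?thesis by simp
qed

lemma final_arith:
  fixes Ka Kb X B U L h c :: real
  assumes Ka: "Ka \<ge> 0" and Kb: "Kb \<ge> 0" and X0: "X \<ge> 0" and B: "B \<ge> 0" and U: "U \<ge> 0" and h: "h > 0"
    and s: "s \<ge> 0"
    and XB: "X \<le> 2 powr s * (B powr s + U)" and UL: "U \<le> c * L" and c: "c \<ge> 0" and L0: "L \<ge> 0"
  shows "min X (Ka + Kb * X * h\<^sup>2) \<le> (2 powr s * c * sqrt Kb + 1) * L * h + (Ka + 2 powr s * B powr s + 1)"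
proof -
  have "min X (Ka + Kb * X * h\<^sup>2) \<le> Ka + min X (Kb * X * h\<^sup>2)" using Ka by (simp add: min_def)
  also have "min X (Kb * X * h\<^sup>2) = X * min 1 (Kb * h\<^sup>2)"
    using min_mult_distrib_left[of X 1 "Kb * h\<^sup>2"] X0 by (simp add: ac_simps)
  also have "X * min 1 (Kb * h\<^sup>2) \<le> 2 powr s * (B powr s + U) * min 1 (Kb * h\<^sup>2)"
    using XB by (intro mult_right_mono) (auto simp: Kb)
  also have "\<dots> = 2 powr s * B powr s * min 1 (Kb * h\<^sup>2) + 2 powr s * U * min 1 (Kb * h\<^sup>2)" by (simp add: algebra_simps)
  also have "\<dots> \<le> 2 powr s * B powr s + 2 powr s * U * (sqrt Kb * h)"
  proof (intro add_mono)
    show "2 powr s * B powr s * min 1 (Kb * h\<^sup>2) \<le> 2 powr s * B powr s"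
      by (intro mult_left_le) (auto simp: Kb)
    show "2 powr s * U * min 1 (Kb * h\<^sup>2) \<le> 2 powr s * U * (sqrt Kb * h)"
      using min_sq_le[OF Kb, of h] h U by (intro mult_left_mono) auto
  qed
  also have "2 powr s * U * (sqrt Kb * h) \<le> 2 powr s * (c * L) * (sqrt Kb * h)"
    using UL h by (intro mult_right_mono mult_left_mono) (auto simp: Kb)
  finally have *: "min X (Ka + Kb * X * h\<^sup>2) \<le> Ka + (2 powr s * B powr s + 2 powr s * (c * L) * (sqrt Kb * h))" by simp
  have "2 powr s * (c * L) * (sqrt Kb * h) \<le> (2 powr s * c * sqrt Kb + 1) * L * h"
    using h L0 by (simp add: algebra_simps)
  with * show ?thesis by linarith
qed



lemma u_choice:
  fixes cd \<sigma> s :: real and n :: nat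
  assumes s: "\<sigma> > 0" and cd: "cd \<ge> 1" and n: "n \<ge> 2" and p: "s \<ge> 0"
  shows "2 * \<sigma> * sqrt (ln (cd * (real n)\<^sup>2)) \<ge> 0"
    and "cd * exp (- (2 * \<sigma> * sqrt (ln (cd * (real n)\<^sup>2)))\<^sup>2 / (4 * \<sigma>\<^sup>2)) = 1 / (real n)\<^sup>2"
    and "(2 * \<sigma> * sqrt (ln (cd * (real n)\<^sup>2))) powr s \<le> (2 * \<sigma> * sqrt (ln cd / ln 2 + 2)) powr s * ln (real n) powr (s / 2)"
proof -
  have n1: "real n \<ge> 2" using n by simp
  have a1: "cd * (real n)\<^sup>2 \<ge> 1"
  proof -
    have q: "(real n)\<^sup>2 \<ge> 1" by (rule one_le_power) (use n1 in simp)
    have "1 * 1 \<le> cd * (real n)\<^sup>2" by (rule mult_mono) (use cd q in auto)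
    then show ?thesis by simp
  qed
  have L0: "ln (cd * (real n)\<^sup>2) \<ge> 0" using a1 by simp
  show "2 * \<sigma> * sqrt (ln (cd * (real n)\<^sup>2)) \<ge> 0" using s L0 by simp
  have "(2 * \<sigma> * sqrt (ln (cd * (real n)\<^sup>2)))\<^sup>2 / (4 * \<sigma>\<^sup>2) = ln (cd * (real n)\<^sup>2)"
    using s L0 by (simp add: power_mult_distrib)
  then show "cd * exp (- (2 * \<sigma> * sqrt (ln (cd * (real n)\<^sup>2)))\<^sup>2 / (4 * \<sigma>\<^sup>2)) = 1 / (real n)\<^sup>2"
    using a1 cd by (simp add: exp_minus field_simps)
  have ln2: "ln (2::real) > 0" by simp
  have lnn: "ln (real n) \<ge> ln 2" using n1 by simp
  have lncd: "ln cd \<ge> 0" using cd by simp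
  have "ln (cd * (real n)\<^sup>2) = ln cd + 2 * ln (real n)"
    using cd n1 by (simp add: ln_mult ln_realpow)
  also have "\<dots> \<le> (ln cd / ln 2 + 2) * ln (real n)"
  proof -
    have "ln cd \<le> ln cd / ln 2 * ln (real n)"
    proof -
      have "ln cd / ln 2 * ln (real n) \<ge> ln cd / ln 2 * ln 2"
        using lnn lncd ln2 by (intro mult_left_mono) auto
      then show ?thesis using ln2 by simp
    qed
    then show ?thesis by (simp add: algebra_simps)
  qed
  finally have le: "ln (cd * (real n)\<^sup>2) \<le> (ln cd / ln 2 + 2) * ln (real n)" .
  have "2 * \<sigma> * sqrt (ln (cd * (real n)\<^sup>2)) \<le> 2 * \<sigma> * (sqrt (ln cd / ln 2 + 2) * sqrt (ln (real n)))"
    using le s by (simp add: real_sqrt_mult[symmetric])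
  hence "(2 * \<sigma> * sqrt (ln (cd * (real n)\<^sup>2))) powr s \<le> (2 * \<sigma> * (sqrt (ln cd / ln 2 + 2) * sqrt (ln (real n)))) powr s"
    using s L0 p by (intro powr_mono2) auto
  also have "\<dots> = (2 * \<sigma> * sqrt (ln cd / ln 2 + 2)) powr s * sqrt (ln (real n)) powr s"
    using s lncd ln2 by (simp add: powr_mult[symmetric] mult.assoc)
  also have "sqrt (ln (real n)) powr s = ln (real n) powr (s / 2)"
  proof -
    have "ln (real n) > 0" using lnn ln2 by linarith
    then show ?thesis by (simp add: powr_half_sqrt[symmetric] powr_powr)
  qed
  finally show "(2 * \<sigma> * sqrt (ln (cd * (real n)\<^sup>2))) powr s \<le> (2 * \<sigma> * sqrt (ln cd / ln 2 + 2)) powr s * ln (real n) powr (s / 2)" .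
qed



lemma prob_core:
  assumes P: "prob_space P" and Es: "E \<in> sets P" and As: "A \<in> sets P" and Bs: "Bad \<in> sets P"
    and sub: "E - A \<subseteq> Bad" and mB: "measure P Bad \<le> 1 / real n" and PE: "measure P E > 0" and n: "n \<ge> 1"
  shows "measure P (A \<inter> E) / measure P E \<ge> 1 - 1 / (real n * measure P E)"
proof -
  interpret prob_space P by (rule P)
  have "measure P (E - A) \<le> measure P Bad" using sub Bs by (intro finite_measure_mono) auto
  hence d: "measure P (E - A) \<le> 1 / real n" using mB by linarith
  have "E - A = E - (A \<inter> E)" by auto
  hence "measure P (E - A) = measure P E - measure P (A \<inter> E)"
    using Es As by (simp add: finite_measure_Diff Int_commute)
  hence eq: "measure P (A \<inter> E) = measure P E - measure P (E - A)" by simp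
  have n0: "real n > 0" using n by simp
  have "1 - 1 / (real n * measure P E) = (measure P E - 1 / real n) / measure P E"
    using PE n0 by (simp add: field_simps)
  also have "\<dots> \<le> (measure P E - measure P (E - A)) / measure P E"
    using d PE by (intro divide_right_mono) auto
  finally show ?thesis unfolding eq .
qed



lemma omega_bound:
  fixes \<theta> \<omega> :: "nat \<Rightarrow> 'a::euclidean_space" and \<nu> :: "'a measure"
  assumes s: "\<sigma> > 0" and p: "p \<ge> 1" and n2: "n \<ge> 2" and B0: "B > 0" and \<theta>B: "\<forall>i<n. norm (\<theta> i) \<le> B"
    and npm: "npmle_mixing \<sigma> n \<omega> \<nu>"
    and \<omega>b: "\<forall>i<n. norm (\<omega> i) \<le> B + 2 * \<sigma> * sqrt (ln (2 powr (real DIM('a) / 2) * (real n)\<^sup>2))"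
    and Km: "(\<integral>\<^sup>+z. ennreal (norm (z::'a) powr p * gauss_dens \<sigma> z) \<partial>lborel) \<le> ennreal Km" and Km0: "Km \<ge> 0"
    and K2: "(\<integral>\<^sup>+y. ennreal (norm y powr p * gauss_dens (2 * \<sigma>) (y::'a)) \<partial>lborel) \<le> ennreal K2" and K20: "K2 \<ge> 0"
    and H: "hellinger (emp_mix_dens \<sigma> \<theta> n) (mix_dens \<sigma> \<nu>) \<le> h" and h0: "h > 0"
  shows "(\<integral>\<^sup>+x. ennreal (norm x powr p) \<partial>\<nu>) \<le> ennreal (
     (2 powr p * (2 * \<sigma> * sqrt (ln (2 powr (real DIM('a) / 2)) / ln 2 + 2)) powr p * sqrt (4 * 2 powr p) + 1) * ln (real n) powr (p / 2) * h
     + (4 * (2 powr p * (Km + B powr p)) + 2 * (2 powr real DIM('a) * K2) + 2 powr p * B powr p + 1))"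
proof -
  define cd :: real where "cd = 2 powr (real DIM('a) / 2)"
  define u where "u = 2 * \<sigma> * sqrt (ln (cd * (real n)\<^sup>2))"
  define M where "M = B + u"
  define \<beta> where "\<beta> = 2 * \<sigma> * sqrt (ln cd / ln 2 + 2)"
  define CB where "CB = 2 powr p * (Km + B powr p)"
  define Ka where "Ka = 4 * CB + 2 * (2 powr real DIM('a) * K2)"
  define Kb :: real where "Kb = 4 * 2 powr p"
  have cd1: "cd \<ge> 1" unfolding cd_def by (rule ge_one_powr_ge_zero) auto
  have p0: "p \<ge> 0" using p by simp
  note uc = u_choice[OF s cd1 n2 p0, folded u_def \<beta>_def]
  have u0: "u \<ge> 0" by (rule uc(1))
  have M0: "M \<ge> 0" using B0 u0 by (simp add: M_def)
  have n1: "n \<ge> 1" using n2 by simp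
  have P: "prob_space \<nu>" and S: "sets \<nu> = sets borel"
    using npm unfolding npmle_mixing_def mixing_measures_def by auto
  have \<omega>M: "\<forall>i<n. norm (\<omega> i) \<le> M" using \<omega>b by (simp add: M_def u_def cd_def)
  have AEM: "AE x in \<nu>. norm x \<le> M" by (rule npmle_support[OF s npm n1 M0 \<omega>M])
  have CB0: "CB \<ge> 0" using Km0 by (simp add: CB_def)
  have CB: "(\<integral>\<^sup>+y. ennreal (norm y powr p * emp_mix_dens \<sigma> \<theta> n y) \<partial>lborel) \<le> ennreal CB"
    unfolding CB_def by (rule emp_moment[OF s n1 p0 \<theta>B Km Km0]) (use B0 in simp)
  have m1: "(\<integral>\<^sup>+x. ennreal (norm x powr p) \<partial>\<nu>) \<le> ennreal (M powr p)"
    by (rule moment_le_M[OF P AEM p0])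
  have m2: "(\<integral>\<^sup>+x. ennreal (norm x powr p) \<partial>\<nu>) \<le> ennreal (2 * (2 * CB + 2 * (2*M) powr p * h\<^sup>2 + 2 powr real DIM('a) * K2))"
    by (rule det_bound[OF s P S p0 AEM M0 emp_nonneg[OF s] emp_meas emp_integrable[OF s n1] CB CB0 K2 K20 H]) (use h0 in simp)
  have eq2: "2 * (2 * CB + 2 * (2*M) powr p * h\<^sup>2 + 2 powr real DIM('a) * K2) = Ka + Kb * M powr p * h\<^sup>2"
    using M0 by (simp add: Ka_def Kb_def powr_mult algebra_simps)
  have mmin: "(\<integral>\<^sup>+x. ennreal (norm x powr p) \<partial>\<nu>) \<le> ennreal (min (M powr p) (Ka + Kb * M powr p * h\<^sup>2))"
    using m1 m2 unfolding eq2 by (simp add: min_def)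
  have XB: "M powr p \<le> 2 powr p * (B powr p + u powr p)"
    unfolding M_def by (rule powr_sum_le) (use B0 u0 p0 in auto)
  have "min (M powr p) (Ka + Kb * M powr p * h\<^sup>2) \<le> (2 powr p * \<beta> powr p * sqrt Kb + 1) * ln (real n) powr (p / 2) * h + (Ka + 2 powr p * B powr p + 1)"
  proof (rule final_arith[OF _ _ _ _ _ h0 p0 XB uc(3)])
    show "Ka \<ge> 0" using CB0 K20 by (simp add: Ka_def)
    show "Kb \<ge> 0" by (simp add: Kb_def)
  qed (use B0 in auto)
  then have "ennreal (min (M powr p) (Ka + Kb * M powr p * h\<^sup>2)) \<le> ennreal ((2 powr p * \<beta> powr p * sqrt Kb + 1) * ln (real n) powr (p / 2) * h + (Ka + 2 powr p * B powr p + 1))"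
    by (rule ennreal_leI)
  with mmin show ?thesis by (simp add: \<beta>_def Ka_def Kb_def CB_def cd_def)
qed



theorem lemma2:
  fixes \<sigma> s :: real
  assumes "\<sigma> > 0" and "s \<ge> 1"
  shows "\<exists>C1>0. \<forall>B>0. \<exists>C2>0.
    \<forall>(n::nat) (\<theta>::nat \<Rightarrow> 'a::euclidean_space) (h::real) (\<nu>hat::(nat \<Rightarrow> 'a) \<Rightarrow> 'a measure).
      let P = sample_space \<sigma> \<theta> n;
          E = {\<omega> \<in> space P. hellinger (emp_mix_dens \<sigma> \<theta> n) (mix_dens \<sigma> (\<nu>hat \<omega>)) \<le> h};
          A = {\<omega> \<in> space P. (\<integral>\<^sup>+ x. ennreal (norm x powr s) \<partial>(\<nu>hat \<omega>))
                   \<le> ennreal (C1 * ln (real n) powr (s / 2) * h + C2)}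
      in n \<ge> 1 \<longrightarrow> h > 0 \<longrightarrow> (\<forall>i<n. norm (\<theta> i) \<le> B) \<longrightarrow>
         (\<forall>\<omega>\<in>space P. npmle_mixing \<sigma> n \<omega> (\<nu>hat \<omega>)) \<longrightarrow>
         E \<in> sets P \<longrightarrow> A \<in> sets P \<longrightarrow> measure P E > 0 \<longrightarrow>
         measure P (A \<inter> E) / measure P E \<ge> 1 - 1 / (real n * measure P E)"
proof -
  have s: "\<sigma> > 0" and p: "s \<ge> 1" using assms by auto
  have p0: "s \<ge> 0" using p by simp
  obtain Km1 where Km1: "(\<integral>\<^sup>+z. ennreal (norm (z::'a) powr s * gauss_dens \<sigma> z) \<partial>lborel) \<le> ennreal Km1"
    using gauss_moment[OF s p0] by blast
  define Km where "Km = max Km1 0"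
  have Km: "(\<integral>\<^sup>+z. ennreal (norm (z::'a) powr s * gauss_dens \<sigma> z) \<partial>lborel) \<le> ennreal Km"
    using Km1 by (rule order_trans) (simp add: Km_def ennreal_leI)
  have Km0: "Km \<ge> 0" by (simp add: Km_def)
  have s2: "2 * \<sigma> > 0" using s by simp
  obtain K21 where K21: "(\<integral>\<^sup>+z. ennreal (norm (z::'a) powr s * gauss_dens (2 * \<sigma>) z) \<partial>lborel) \<le> ennreal K21"
    using gauss_moment[OF s2 p0] by blast
  define K2 where "K2 = max K21 0"
  have K2: "(\<integral>\<^sup>+z. ennreal (norm (z::'a) powr s * gauss_dens (2 * \<sigma>) z) \<partial>lborel) \<le> ennreal K2"
    using K21 by (rule order_trans) (simp add: K2_def ennreal_leI)
  have K20: "K2 \<ge> 0" by (simp add: K2_def)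
  define C1 where "C1 = 2 powr s * (2 * \<sigma> * sqrt (ln (2 powr (real DIM('a) / 2)) / ln 2 + 2)) powr s * sqrt (4 * 2 powr s) + 1"
  have C1: "C1 > 0" unfolding C1_def by (intro add_nonneg_pos mult_nonneg_nonneg) auto
  show ?thesis
  proof (rule exI[of _ C1], intro conjI allI impI C1)
    fix B :: real assume B0: "B > 0"
    define C2 where "C2 = 4 * (2 powr s * (Km + B powr s)) + 2 * (2 powr real DIM('a) * K2) + 2 powr s * B powr s + 1"
    have C2: "C2 > 0" unfolding C2_def using Km0 K20 by (intro add_nonneg_pos add_nonneg_nonneg mult_nonneg_nonneg) auto
    show "\<exists>C2>0. \<forall>(n::nat) (\<theta>::nat \<Rightarrow> 'a::euclidean_space) (h::real) (\<nu>hat::(nat \<Rightarrow> 'a) \<Rightarrow> 'a measure).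
      let P = sample_space \<sigma> \<theta> n;
          E = {\<omega> \<in> space P. hellinger (emp_mix_dens \<sigma> \<theta> n) (mix_dens \<sigma> (\<nu>hat \<omega>)) \<le> h};
          A = {\<omega> \<in> space P. (\<integral>\<^sup>+ x. ennreal (norm x powr s) \<partial>(\<nu>hat \<omega>))
                   \<le> ennreal (C1 * ln (real n) powr (s / 2) * h + C2)}
      in n \<ge> 1 \<longrightarrow> h > 0 \<longrightarrow> (\<forall>i<n. norm (\<theta> i) \<le> B) \<longrightarrow>
         (\<forall>\<omega>\<in>space P. npmle_mixing \<sigma> n \<omega> (\<nu>hat \<omega>)) \<longrightarrow>
         E \<in> sets P \<longrightarrow> A \<in> sets P \<longrightarrow> measure P E > 0 \<longrightarrow>
         measure P (A \<inter> E) / measure P E \<ge> 1 - 1 / (real n * measure P E)"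
    proof (rule exI[of _ C2], intro conjI allI C2)
      fix n :: nat and \<theta> :: "nat \<Rightarrow> 'a" and h :: real and \<nu>hat :: "(nat \<Rightarrow> 'a) \<Rightarrow> 'a measure"
      define P where "P = sample_space \<sigma> \<theta> n"
      define E where "E = {\<omega> \<in> space P. hellinger (emp_mix_dens \<sigma> \<theta> n) (mix_dens \<sigma> (\<nu>hat \<omega>)) \<le> h}"
      define A where "A = {\<omega> \<in> space P. (\<integral>\<^sup>+ x. ennreal (norm x powr s) \<partial>(\<nu>hat \<omega>))
                   \<le> ennreal (C1 * ln (real n) powr (s / 2) * h + C2)}"
      have main: "measure P (A \<inter> E) / measure P E \<ge> 1 - 1 / (real n * measure P E)"
        if n1: "n \<ge> 1" and h0: "h > 0" and \<theta>B: "\<forall>i<n. norm (\<theta> i) \<le> B"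
          and npm: "\<forall>\<omega>\<in>space P. npmle_mixing \<sigma> n \<omega> (\<nu>hat \<omega>)"
          and Es: "E \<in> sets P" and As: "A \<in> sets P" and PE: "measure P E > 0"
      proof -
        define D where "D = density lborel (\<lambda>y. ennreal (emp_mix_dens \<sigma> \<theta> n y))"
        have PD: "P = PiM {..<n} (\<lambda>_. D)" by (simp add: P_def D_def sample_space_def)
        have Dp: "prob_space D"
          by (rule prob_spaceI) (simp add: D_def emeasure_density emp_total[OF s n1])
        interpret DD: prob_space D by (rule Dp)
        have Pp: "prob_space P" unfolding PD by (rule prob_space_PiM) (rule Dp)
        show ?thesis
        proof (cases "n = 1")
          case True
          show ?thesis
            by (rule prob_core[OF Pp Es As _ _ _ PE n1, of "space P"]) (auto simp: True prob_space.prob_space[OF Pp] E_def)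
        next
          case False
          then have n2: "n \<ge> 2" using n1 by simp
          define cd :: real where "cd = 2 powr (real DIM('a) / 2)"
          have cd1: "cd \<ge> 1" unfolding cd_def by (rule ge_one_powr_ge_zero) auto
          define u where "u = 2 * \<sigma> * sqrt (ln (cd * (real n)\<^sup>2))"
          note uc = u_choice[OF s cd1 n2 p0, folded u_def]
          have u0: "u \<ge> 0" by (rule uc(1))
          define S where "S = {y::'a. B + u < norm y}"
          have Sopen: "open S" unfolding S_def by (intro open_Collect_less) (auto intro: continuous_intros)
          have SD: "S \<in> sets D" using Sopen by (simp add: D_def)
          define Bad where "Bad = {\<omega> \<in> space P. \<exists>i<n. \<omega> i \<in> S}"
          have Bads: "Bad \<in> sets P" unfolding Bad_def PD using SD by measurable
          have mB1: "measure P Bad \<le> real n * measure D S"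
            unfolding Bad_def PD by (rule pi_union_bound[OF Dp SD])
          have "emeasure D S = (\<integral>\<^sup>+y. ennreal (emp_mix_dens \<sigma> \<theta> n y) * indicator S y \<partial>lborel)"
            unfolding D_def using Sopen by (simp add: emeasure_density)
          also have "\<dots> \<le> ennreal (cd * exp (- u\<^sup>2 / (4 * \<sigma>\<^sup>2)))"
            unfolding S_def cd_def by (rule emp_tail[OF s n1 \<theta>B u0])
          also have "\<dots> = ennreal (1 / (real n)\<^sup>2)" using uc(2) by simp
          finally have "measure D S \<le> 1 / (real n)\<^sup>2"
            using DD.emeasure_eq_measure[of S] by (simp add: ennreal_le_iff)
          hence "real n * measure D S \<le> real n * (1 / (real n)\<^sup>2)" by (intro mult_left_mono) auto
          also have "\<dots> = 1 / real n" using n1 by (simp add: power2_eq_square)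
          finally have mB: "measure P Bad \<le> 1 / real n" using mB1 by linarith
          have sub: "E - A \<subseteq> Bad"
          proof
            fix \<omega> assume \<omega>: "\<omega> \<in> E - A"
            show "\<omega> \<in> Bad"
            proof (rule ccontr)
              assume nB: "\<omega> \<notin> Bad"
              have sp: "\<omega> \<in> space P" and H: "hellinger (emp_mix_dens \<sigma> \<theta> n) (mix_dens \<sigma> (\<nu>hat \<omega>)) \<le> h"
                using \<omega> by (auto simp: E_def)
              have \<omega>b: "\<forall>i<n. norm (\<omega> i) \<le> B + 2 * \<sigma> * sqrt (ln (2 powr (real DIM('a) / 2) * (real n)\<^sup>2))"
              proof -
                have "\<forall>i<n. \<not> (B + u < norm (\<omega> i))" using nB sp by (auto simp: Bad_def S_def)
                then show ?thesis by (simp add: not_less u_def cd_def)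
              qed
              have "(\<integral>\<^sup>+x. ennreal (norm x powr s) \<partial>(\<nu>hat \<omega>)) \<le> ennreal (C1 * ln (real n) powr (s / 2) * h + C2)"
                unfolding C1_def C2_def
                by (rule omega_bound[OF s p n2 B0 \<theta>B npm[rule_format, OF sp] \<omega>b Km Km0 K2 K20 H h0])
              then have "\<omega> \<in> A" using sp by (simp add: A_def)
              with \<omega> show False by simp
            qed
          qed
          show ?thesis by (rule prob_core[OF Pp Es As Bads sub mB PE n1])
        qed
      qed
      show "let P = sample_space \<sigma> \<theta> n;
          E = {\<omega> \<in> space P. hellinger (emp_mix_dens \<sigma> \<theta> n) (mix_dens \<sigma> (\<nu>hat \<omega>)) \<le> h};
          A = {\<omega> \<in> space P. (\<integral>\<^sup>+ x. ennreal (norm x powr s) \<partial>(\<nu>hat \<omega>))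
                   \<le> ennreal (C1 * ln (real n) powr (s / 2) * h + C2)}
      in n \<ge> 1 \<longrightarrow> h > 0 \<longrightarrow> (\<forall>i<n. norm (\<theta> i) \<le> B) \<longrightarrow>
         (\<forall>\<omega>\<in>space P. npmle_mixing \<sigma> n \<omega> (\<nu>hat \<omega>)) \<longrightarrow>
         E \<in> sets P \<longrightarrow> A \<in> sets P \<longrightarrow> measure P E > 0 \<longrightarrow>
         measure P (A \<inter> E) / measure P E \<ge> 1 - 1 / (real n * measure P E)"
        unfolding Let_def P_def[symmetric] E_def[symmetric] A_def[symmetric] using main by blast
    qed
  qed
qed

end
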